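(* Let $U,V\in\mathbb{R}_{\max}^{m\times n}$, $b,d\in\mathbb{R}_{\max}^m$, $p\in\mathbb{R}_{\max}^n$, $q\in(\mathbb{R}\cup\{+\infty\})^n$, with $A$, $B(\lambda)$, $\Phi$, strategies and the game graph as described in the context. Then $\lambda^*\in\mathbb{R}$ is optimal (i.e. $\Phi(\lambda^* )\ge 0$ and $\Phi(\lambda)<0$ for all $\lambda<\lambda^*$) if and only if $\Phi(\lambda^* )\geq 0$ and there exist a positional strategy $\tau$ of Min and a node $j$ of Min such that, in the game graph defined by $A_\tau$ and $B(\lambda^* )$, every cycle accessible from $j$ has non-positive weight, and every cycle of zero weight accessible from $j$ contains a node of Max that does not belong to the group $[m]$.
   Context: Max-plus notation: $\mathbb{R}_{\max}=\mathbb{R}\cup\{-\infty\}$, $a\oplus b=\max(a,b)$, $a\otimes b=a+b$, extended to matrices as usual ($(A\otimes B)_{ij}=\max_k(a_{ik}+b_{kj})$). $I$ is the max-plus identity (0 on the diagonal, $-\infty$ elsewhere). The conjugate $a^-$ is $-a$ for real $a$, $+\infty$ for $a=-\infty$, $-\infty$ for $a=+\infty$; $q^-=(q_i^-)$ as a row vector. These data define Problem (P): minimize $x^-\otimes p\oplus q^-\otimes x$ over $x\in\mathbb{R}^n$ subject to $U\otimes x\oplus b\le V\otimes x\oplus d$. Set $$A=\begin{pmatrix} U & b\\ -\infty & p\\ q^- & -\infty\end{pmatrix},\qquad B(\lambda)=\begin{pmatrix} V & d\\ \lambda\otimes I & -\infty\\ -\infty & \lambda\end{pmatrix}$$ ($(m+n+1)\times(n+1)$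 matrices; the middle block row of $A$ is $(-\infty_{n\times n},\,p)$, its last row is $(q^-,-\infty)$; $\lambda\otimes I$ has $\lambda$ on the diagonal and $-\infty$ elsewhere; the last row of $B(\lambda)$ is $(-\infty,\dots,-\infty,\lambda)$). Game graph defined by matrices $A'$ and $B'$ (both $(m+n+1)\times(n+1)$): nodes of Max are the rows $1,\dots,m+n+1$, and the first $m$ rows form the group $[m]$ (corresponding to the constraint $U\otimes x\oplus b\le V\otimes x\oplus d$); nodes of Min are the columns $1,\dots,n+1$. There is an arc from Max node $i$ to Min node $l$ of weight $b'_{il}$ whenever $b'_{il}\ne-\infty$, and an arc from Min node $j$ to Max node $i$ of weight $-a'_{ij}$ whenever $a'_{ij}\neq-\infty$. The weight of a cycle is the sum of its arc weights. A positional strategy of Min is a map $\tau:\{1,\dots,n+1\}\to\{1,\dots,m+n+1\}$ with $a_{\tau(j)j}\ne-\infty$; $A_\tau$ keeps the entries $a_{\tau(j)j}$ and replaces all other entries by $-\infty$. For $M\times N$ matrices $A',B'$, $A'^\sharp B'$ denotes the map $f_j(x)=\min_{k:a'_{kj}\ne-\infty}(-a'_{kj}+\max_{l:b'_{kl}\ne-\infty}(b'_{kl}+x_l))$ on $\mathbb{R}^N$, with cycle-time vector $\chi(A'^\sharp B')=\lim_k f^k(0)/k$; $\Phi(\lambda)=\min_i\chi_i(A^\sharp B(\lambda))$. (Standing assumption: every column of $A$ and every row of $B(\lambda)$ has a finite entry.) The condition $\Phi(\lambda)\ge0$ expresses that Problem (P) has a feasible $x\in\mathbb{R}^n$ with objective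 value at most $\lambda$. *)

theory Defs
  imports "HOL-Analysis.Analysis" "HOL-Library.Extended_Real"
begin

text \<open>Max-plus scalars are represented in ereal; the max-plus zero is -\<infinity>.
  Matrices are functions nat \<Rightarrow> nat \<Rightarrow> ereal, indices are 0-based.
  Rows 0..<m: constraint rows; rows m..<m+n: middle block; row m+n: last row.
  Columns 0..<n: x-columns; column n: last column.\<close>

definition Amat :: "nat \<Rightarrow> nat \<Rightarrow> (nat \<Rightarrow> nat \<Rightarrow> ereal) \<Rightarrow> (nat \<Rightarrow> ereal)
    \<Rightarrow> (nat \<Rightarrow> ereal) \<Rightarrow> (nat \<Rightarrow> ereal) \<Rightarrow> nat \<Rightarrow> nat \<Rightarrow> ereal" where
  "Amat m n U b p q i j =
     (if i < m then (if j < n then U i j else if j = n then b i else -\<infinity>)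
      else if i < m + n then (if j = n then p (i - m) else -\<infinity>)
      else if i = m + n then (if j < n then - q j else -\<infinity>)
      else -\<infinity>)"

definition Bmat :: "nat \<Rightarrow> nat \<Rightarrow> (nat \<Rightarrow> nat \<Rightarrow> ereal) \<Rightarrow> (nat \<Rightarrow> ereal)
    \<Rightarrow> real \<Rightarrow> nat \<Rightarrow> nat \<Rightarrow> ereal" where
  "Bmat m n V d lam i j =
     (if i < m then (if j < n then V i j else if j = n then d i else -\<infinity>)
      else if i < m + n then (if j = i - m then ereal lam else -\<infinity>)
      else if i = m + n then (if j = n then ereal lam else -\<infinity>)
      else -\<infinity>)"

text \<open>The map A'^# B' on R^N (M rows, N columns); vectors are nat \<Rightarrow> real,
  only coordinates < N matter.\<close>
definition sharp_map :: "nat \<Rightarrow> nat \<Rightarrow> (nat \<Rightarrow> nat \<Rightarrow> ereal) \<Rightarrow> (nat \<Rightarrow> nat \<Rightarrow> ereal)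
    \<Rightarrow> (nat \<Rightarrow> real) \<Rightarrow> (nat \<Rightarrow> real)" where
  "sharp_map M N A' B' x = (\<lambda>j. if j < N then
      Min {- real_of_ereal (A' k j)
           + Max {real_of_ereal (B' k l) + x l | l. l < N \<and> B' k l \<noteq> -\<infinity>}
          | k. k < M \<and> A' k j \<noteq> -\<infinity>}
      else 0)"

definition cycle_time :: "nat \<Rightarrow> nat \<Rightarrow> (nat \<Rightarrow> nat \<Rightarrow> ereal) \<Rightarrow> (nat \<Rightarrow> nat \<Rightarrow> ereal)
    \<Rightarrow> nat \<Rightarrow> real" where
  "cycle_time M N A' B' i = lim (\<lambda>k. ((sharp_map M N A' B' ^^ k) (\<lambda>_. 0)) i / real k)"

definition Phi :: "nat \<Rightarrow> nat \<Rightarrow> (nat \<Rightarrow> nat \<Rightarrow> ereal) \<Rightarrow> (nat \<Rightarrow> ereal)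
    \<Rightarrow> (nat \<Rightarrow> ereal) \<Rightarrow> (nat \<Rightarrow> ereal) \<Rightarrow> (nat \<Rightarrow> nat \<Rightarrow> ereal) \<Rightarrow> (nat \<Rightarrow> ereal)
    \<Rightarrow> real \<Rightarrow> real" where
  "Phi m n U b p q V d lam =
     Min {cycle_time (m + n + 1) (n + 1) (Amat m n U b p q) (Bmat m n V d lam) i | i. i < n + 1}"

definition optimal :: "(real \<Rightarrow> real) \<Rightarrow> real \<Rightarrow> bool" where
  "optimal \<Phi> lam0 \<longleftrightarrow> \<Phi> lam0 \<ge> 0 \<and> (\<forall>lam < lam0. \<Phi> lam < 0)"

definition min_strategy :: "nat \<Rightarrow> nat \<Rightarrow> (nat \<Rightarrow> nat \<Rightarrow> ereal) \<Rightarrow> (nat \<Rightarrow> nat) \<Rightarrow> bool" where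
  "min_strategy M N A' \<tau> \<longleftrightarrow> (\<forall>j < N. \<tau> j < M \<and> A' (\<tau> j) j \<noteq> -\<infinity>)"

definition restrict_strat :: "nat \<Rightarrow> (nat \<Rightarrow> nat \<Rightarrow> ereal) \<Rightarrow> (nat \<Rightarrow> nat) \<Rightarrow> nat \<Rightarrow> nat \<Rightarrow> ereal" where
  "restrict_strat N A' \<tau> i j = (if j < N \<and> i = \<tau> j then A' i j else -\<infinity>)"

text \<open>Game graph: Max nodes are rows, Min nodes are columns.\<close>
datatype gnode = MaxN nat | MinN nat

fun gg_arc :: "nat \<Rightarrow> nat \<Rightarrow> (nat \<Rightarrow> nat \<Rightarrow> ereal) \<Rightarrow> (nat \<Rightarrow> nat \<Rightarrow> ereal)
    \<Rightarrow> gnode \<Rightarrow> gnode \<Rightarrow> bool" where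
  "gg_arc M N A' B' (MaxN i) (MinN l) = (i < M \<and> l < N \<and> B' i l \<noteq> -\<infinity>)"
| "gg_arc M N A' B' (MinN j) (MaxN i) = (j < N \<and> i < M \<and> A' i j \<noteq> -\<infinity>)"
| "gg_arc M N A' B' _ _ = False"

fun gg_weight :: "(nat \<Rightarrow> nat \<Rightarrow> ereal) \<Rightarrow> (nat \<Rightarrow> nat \<Rightarrow> ereal) \<Rightarrow> gnode \<Rightarrow> gnode \<Rightarrow> real" where
  "gg_weight A' B' (MaxN i) (MinN l) = real_of_ereal (B' i l)"
| "gg_weight A' B' (MinN j) (MaxN i) = - real_of_ereal (A' i j)"
| "gg_weight A' B' _ _ = 0"

definition gg_cycle :: "nat \<Rightarrow> nat \<Rightarrow> (nat \<Rightarrow> nat \<Rightarrow> ereal) \<Rightarrow> (nat \<Rightarrow> nat \<Rightarrow> ereal)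
    \<Rightarrow> gnode list \<Rightarrow> bool" where
  "gg_cycle M N A' B' cs \<longleftrightarrow> cs \<noteq> [] \<and> distinct cs \<and>
     (\<forall>i < length cs. gg_arc M N A' B' (cs ! i) (cs ! ((i + 1) mod length cs)))"

definition cycle_weight :: "(nat \<Rightarrow> nat \<Rightarrow> ereal) \<Rightarrow> (nat \<Rightarrow> nat \<Rightarrow> ereal) \<Rightarrow> gnode list \<Rightarrow> real" where
  "cycle_weight A' B' cs = (\<Sum>i < length cs. gg_weight A' B' (cs ! i) (cs ! ((i + 1) mod length cs)))"

definition gg_reach :: "nat \<Rightarrow> nat \<Rightarrow> (nat \<Rightarrow> nat \<Rightarrow> ereal) \<Rightarrow> (nat \<Rightarrow> nat \<Rightarrow> ereal)
    \<Rightarrow> (gnode \<times> gnode) set" where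
  "gg_reach M N A' B' = {(u, v). gg_arc M N A' B' u v}\<^sup>*"

definition cycle_accessible :: "nat \<Rightarrow> nat \<Rightarrow> (nat \<Rightarrow> nat \<Rightarrow> ereal) \<Rightarrow> (nat \<Rightarrow> nat \<Rightarrow> ereal)
    \<Rightarrow> gnode \<Rightarrow> gnode list \<Rightarrow> bool" where
  "cycle_accessible M N A' B' u cs \<longleftrightarrow> (\<exists>v \<in> set cs. (u, v) \<in> gg_reach M N A' B')"

end

theory Submission
  imports Defs
begin


definition gcyc :: "('a \<Rightarrow> 'a \<Rightarrow> bool) \<Rightarrow> 'a list \<Rightarrow> bool" where
  "gcyc E cs \<longleftrightarrow> cs \<noteq> [] \<and> distinct cs \<and> (\<forall>i < length cs. E (cs ! i) (cs ! ((i + 1) mod length cs)))"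

definition gcw :: "('a \<Rightarrow> 'a \<Rightarrow> real) \<Rightarrow> 'a list \<Rightarrow> real" where
  "gcw w cs = (\<Sum>i < length cs. w (cs ! i) (cs ! ((i + 1) mod length cs)))"

definition walk :: "('a \<Rightarrow> 'a \<Rightarrow> bool) \<Rightarrow> (nat \<Rightarrow> 'a) \<Rightarrow> nat \<Rightarrow> bool" where
  "walk E p n \<longleftrightarrow> (\<forall>t<n. E (p t) (p (Suc t)))"

definition wsum :: "('a \<Rightarrow> 'a \<Rightarrow> real) \<Rightarrow> (nat \<Rightarrow> 'a) \<Rightarrow> nat \<Rightarrow> real" where
  "wsum w p n = (\<Sum>t<n. w (p t) (p (Suc t)))"

abbreviation rel :: "('a \<Rightarrow> 'a \<Rightarrow> bool) \<Rightarrow> ('a \<times> 'a) set" where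
  "rel E \<equiv> {(x, y). E x y}"

lemma walk_reach: "walk E p n \<Longrightarrow> t \<le> n \<Longrightarrow> (p 0, p t) \<in> (rel E)\<^sup>*"
proof (induction t)
  case 0 then show ?case by simp
next
  case (Suc t)
  then have "(p 0, p t) \<in> (rel E)\<^sup>*" by simp
  moreover have "E (p t) (p (Suc t))" using Suc.prems unfolding walk_def by simp
  ultimately show ?case by (simp add: rtrancl_into_rtrancl)
qed

lemma reach_walk:
  assumes "(u, v) \<in> (rel E)\<^sup>*"
  shows "\<exists>p n. p 0 = u \<and> p n = v \<and> walk E p n"
  using assms
proof (induction rule: rtrancl_induct)
  case base
  then show ?case by (rule exI[of _ "\<lambda>_. u"], rule exI[of _ 0]) (simp add: walk_def)
next
  case (step y z)
  then obtain p n where p: "p 0 = u" "p n = y" "walk E p n" by blast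
  let ?q = "p(Suc n := z)"
  have "walk E ?q (Suc n)" using p step(2) unfolding walk_def
    by (auto simp: less_Suc_eq)
  moreover have "?q 0 = u" "?q (Suc n) = z" using p by auto
  ultimately show ?case by blast
qed

lemma cyc_reach0:
  assumes "gcyc E cs" "t < length cs"
  shows "(cs ! t, cs ! 0) \<in> (rel E)\<^sup>*"
  using assms(2)
proof (induction "length cs - t" arbitrary: t)
  case 0 then show ?case by simp
next
  case (Suc x)
  have arc: "E (cs ! t) (cs ! ((t + 1) mod length cs))"
    using assms(1) Suc.prems unfolding gcyc_def by blast
  show ?case
  proof (cases "t + 1 < length cs")
    case True
    then have "(cs ! (t+1), cs ! 0) \<in> (rel E)\<^sup>*" using Suc.hyps(1)[of "t+1"] Suc.hyps(2) by simp
    then show ?thesis using arc True by (simp add: converse_rtrancl_into_rtrancl)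
  next
    case False
    then have "t + 1 = length cs" using Suc.prems by simp
    then show ?thesis using arc by (intro r_into_rtrancl) simp
  qed
qed

lemma cyc_access_reach0:
  assumes "gcyc E cs" "x \<in> set cs" "(v, x) \<in> (rel E)\<^sup>*"
  shows "(v, cs ! 0) \<in> (rel E)\<^sup>*"
proof -
  obtain t where "t < length cs" "x = cs ! t" using assms(2) by (auto simp: in_set_conv_nth)
  then show ?thesis using cyc_reach0[OF assms(1)] assms(3) by (meson rtrancl_trans)
qed

lemma gcyc_len: "gcyc E cs \<Longrightarrow> 0 < length cs"
  unfolding gcyc_def by simp

lemma gcyc_walk:
  assumes "gcyc E cs"
  shows "walk E (\<lambda>t. cs ! (t mod length cs)) (length cs)"
  using assms unfolding gcyc_def walk_def by (simp add: mod_Suc)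

lemma gcyc_walk_sum:
  "wsum w (\<lambda>t. cs ! (t mod length cs)) (length cs) = gcw w cs"
  unfolding wsum_def gcw_def by (intro sum.cong) (auto simp: mod_Suc)

lemma disc_walk:
  fixes w :: "'a \<Rightarrow> 'a \<Rightarrow> real" and h :: "'a \<Rightarrow> real"
  assumes "walk E p n" "0 \<le> \<delta>" "\<forall>u v. E u v \<longrightarrow> w u v + \<delta> * h v \<le> h u"
  shows "(\<Sum>t<n. \<delta>^t * w (p t) (p (Suc t))) + \<delta>^n * h (p n) \<le> h (p 0)"
  using assms(1)
proof (induction n)
  case 0 then show ?case by simp
next
  case (Suc n)
  have w: "walk E p n" using Suc.prems unfolding walk_def by simp
  have e: "E (p n) (p (Suc n))" using Suc.prems unfolding walk_def by simp
  have "\<delta>^n * (w (p n) (p (Suc n)) + \<delta> * h (p (Suc n))) \<le> \<delta>^n * h (p n)"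
    using assms(3) e assms(2) by (intro mult_left_mono) auto
  then have "(\<Sum>t<Suc n. \<delta>^t * w (p t) (p (Suc t))) + \<delta>^Suc n * h (p (Suc n))
     \<le> (\<Sum>t<n. \<delta>^t * w (p t) (p (Suc t))) + \<delta>^n * h (p n)"
    by (simp add: algebra_simps)
  then show ?case using Suc.IH[OF w] by linarith
qed

lemma disc_ineq:
  fixes w :: "'a \<Rightarrow> 'a \<Rightarrow> real" and h :: "'a \<Rightarrow> real"
  assumes E: "\<forall>u v. E u v \<longrightarrow> w u v + \<delta> * h v \<le> h u"
    and d: "0 < \<delta>" "\<delta> < 1"
    and p: "walk E p s" "p s = cs ! 0" and c: "gcyc E cs"
  shows "(1 - \<delta>) * (\<Sum>t<s. \<delta>^t * w (p t) (p (Suc t)))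
      + \<delta>^s * (\<Sum>t<length cs. \<delta>^t * w (cs ! t) (cs ! ((t + 1) mod length cs))) / (\<Sum>t<length cs. \<delta>^t)
      \<le> (1 - \<delta>) * h (p 0)"
proof -
  let ?L = "length cs"
  let ?P = "\<Sum>t<s. \<delta>^t * w (p t) (p (Suc t))"
  let ?Q = "\<Sum>t<?L. \<delta>^t * w (cs ! t) (cs ! ((t + 1) mod ?L))"
  let ?D = "\<Sum>t<?L. \<delta>^t"
  have L: "0 < ?L" using gcyc_len[OF c] .
  have a: "?P + \<delta>^s * h (cs ! 0) \<le> h (p 0)" using disc_walk[OF p(1) _ E] d p(2) by simp
  have b0: "(\<Sum>t<?L. \<delta>^t * w (cs ! (t mod ?L)) (cs ! (Suc t mod ?L))) + \<delta>^?L * h (cs ! (?L mod ?L)) \<le> h (cs ! (0 mod ?L))"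
    using disc_walk[OF gcyc_walk[OF c] _ E] d by simp
  have "(\<Sum>t<?L. \<delta>^t * w (cs ! (t mod ?L)) (cs ! (Suc t mod ?L))) = ?Q"
    by (intro sum.cong) auto
  with b0 have b: "?Q + \<delta>^?L * h (cs ! 0) \<le> h (cs ! 0)" by simp
  have Dpos: "0 < ?D"
  proof -
    have "?D \<ge> \<delta>^0" using L d by (intro member_le_sum) auto
    then show ?thesis by simp
  qed
  have e1: "1 - \<delta>^?L = (1 - \<delta>) * ?D" by (rule one_diff_power_eq)
  from b have "?Q \<le> (1 - \<delta>^?L) * h (cs ! 0)" by (simp add: algebra_simps)
  then have "?Q \<le> (1 - \<delta>) * ?D * h (cs ! 0)" by (simp only: e1)
  then have "?Q \<le> ((1 - \<delta>) * h (cs ! 0)) * ?D" by (simp add: algebra_simps)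
  then have "?Q / ?D \<le> (1 - \<delta>) * h (cs ! 0)" using Dpos by (simp add: pos_divide_le_eq)
  then have "\<delta>^s * (?Q / ?D) \<le> \<delta>^s * ((1 - \<delta>) * h (cs ! 0))" using d by (intro mult_left_mono) auto
  moreover have "(1 - \<delta>) * (?P + \<delta>^s * h (cs ! 0)) \<le> (1 - \<delta>) * h (p 0)" using a d by (intro mult_left_mono) auto
  ultimately show ?thesis by (simp add: algebra_simps)
qed



lemma sum_split3:
  fixes g :: "nat \<Rightarrow> real"
  assumes "i \<le> j" "j \<le> n"
  shows "(\<Sum>t<n. g t) = (\<Sum>t<i. g t) + (\<Sum>t\<in>{i..<j}. g t) + (\<Sum>t\<in>{j..<n}. g t)"
proof -
  have "(\<Sum>t<n. g t) = (\<Sum>t\<in>{0..<n}. g t)" by (simp add: lessThan_atLeast0)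
  also have "\<dots> = (\<Sum>t\<in>{0..<i}. g t) + (\<Sum>t\<in>{i..<n}. g t)"
    using assms by (simp add: sum.atLeastLessThan_concat)
  also have "(\<Sum>t\<in>{i..<n}. g t) = (\<Sum>t\<in>{i..<j}. g t) + (\<Sum>t\<in>{j..<n}. g t)"
    using assms by (simp add: sum.atLeastLessThan_concat)
  finally show ?thesis by (simp add: lessThan_atLeast0)
qed

lemma walk_bound:
  fixes w :: "'a \<Rightarrow> 'a \<Rightarrow> real" and W c :: real
  assumes fin: "finite S" and inS: "\<forall>u v. E u v \<longrightarrow> u \<in> S \<and> v \<in> S"
    and Wb: "\<forall>u v. E u v \<longrightarrow> \<bar>w u v\<bar> \<le> W" and W0: "0 \<le> W"
    and cyc: "\<forall>cs. gcyc E cs \<and> (\<exists>x\<in>set cs. (v, x) \<in> (rel E)\<^sup>*) \<longrightarrow> gcw w cs \<le> c * length cs"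
  shows "walk E p n \<Longrightarrow> p 0 = v \<Longrightarrow> wsum w p n \<le> c * n + card S * (W + \<bar>c\<bar>)"
proof (induction n arbitrary: p rule: less_induct)
  case (less n)
  let ?K = "card S * (W + \<bar>c\<bar>)"
  have K0: "0 \<le> ?K" using W0 by simp
  show ?case
  proof (cases "\<exists>j\<le>n. \<exists>i<j. p i = p j")
    case False
    show ?thesis
    proof (cases "n = 0")
      case True then show ?thesis using K0 by (simp add: wsum_def)
    next
      case False
      have sub: "p ` {..n} \<subseteq> S"
      proof
        fix x assume "x \<in> p ` {..n}"
        then obtain t where t: "t \<le> n" "x = p t" by auto
        show "x \<in> S"
        proof (cases "t < n")
          case True
          then have "E (p t) (p (Suc t))" using less.prems(1) unfolding walk_def by simp
          then show ?thesis using inS t(2) by simp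
        next
          case False
          then have "t = Suc (n - 1)" using t \<open>n \<noteq> 0\<close> by simp
          moreover have "E (p (n - 1)) (p (Suc (n - 1)))" using less.prems(1) \<open>n \<noteq> 0\<close> unfolding walk_def
            by (metis diff_less zero_less_one not_gr_zero)
          ultimately show ?thesis using inS t(2) by simp
        qed
      qed
      have inj: "inj_on p {..n}"
        unfolding inj_on_def
      proof (intro ballI impI)
        fix a b assume ab: "a \<in> {..n}" "b \<in> {..n}" "p a = p b"
        show "a = b"
        proof (rule ccontr)
          assume "a \<noteq> b"
          then consider "a < b" | "b < a" by linarith
          then show False
          proof cases
            case 1
            have "b \<le> n" using ab by simp
            then show ?thesis using 1 ab(3) \<open>\<not> (\<exists>j\<le>n. \<exists>i<j. p i = p j)\<close> by auto
          next
            case 2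
            have "a \<le> n" using ab by simp
            then show ?thesis using 2 ab(3) \<open>\<not> (\<exists>j\<le>n. \<exists>i<j. p i = p j)\<close> by (metis)
          qed
        qed
      qed
      have "card (p ` {..n}) = Suc n" using card_image[OF inj] by simp
      then have nS: "Suc n \<le> card S" using card_mono[OF fin sub] by simp
      have tb: "\<And>t. t < n \<Longrightarrow> w (p t) (p (Suc t)) \<le> W"
      proof -
        fix t assume "t < n"
        then have "E (p t) (p (Suc t))" using less.prems(1) unfolding walk_def by simp
        then have "\<bar>w (p t) (p (Suc t))\<bar> \<le> W" using Wb by simp
        then show "w (p t) (p (Suc t)) \<le> W" by linarith
      qed
      have "wsum w p n \<le> (\<Sum>t<n. W)" unfolding wsum_def
        using tb by (intro sum_mono) simp
      also have "\<dots> = n * W" by simp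
      also have "\<dots> \<le> card S * W" using nS W0 by (intro mult_right_mono) auto
      finally have a: "wsum w p n \<le> card S * W" .
      have "- (c * n) \<le> \<bar>c\<bar> * n" by (simp add: abs_if)
      also have "\<dots> \<le> \<bar>c\<bar> * card S" using nS by (intro mult_left_mono) auto
      finally have "- (c * n) \<le> \<bar>c\<bar> * card S" .
      then show ?thesis using a by (simp add: algebra_simps)
    qed
  next
    case True
    define j where "j = (LEAST j. \<exists>i<j. p i = p j)"
    obtain j0 i0 where j0: "j0 \<le> n" "i0 < j0" "p i0 = p j0" using True by auto
    have ex: "\<exists>i<j. p i = p j" unfolding j_def
      by (rule LeastI[of "\<lambda>j. \<exists>i<j. p i = p j" j0]) (use j0 in auto)
    have "j \<le> j0" unfolding j_def
      by (rule Least_le[of "\<lambda>j. \<exists>i<j. p i = p j" j0]) (use j0 in auto)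
    then have jn: "j \<le> n" using j0 by simp
    have minj: "\<And>j' i. j' < j \<Longrightarrow> i < j' \<Longrightarrow> p i \<noteq> p j'"
    proof -
      fix j' i assume a: "j' < j" "i < j'"
      have "\<not> (\<exists>i<j'. p i = p j')" using not_less_Least[of j' "\<lambda>j. \<exists>i<j. p i = p j"] a(1) unfolding j_def by simp
      then show "p i \<noteq> p j'" using a(2) by auto
    qed
    obtain i where ij: "i < j" "p i = p j" using ex by auto
    define L where "L = j - i"
    have L0: "0 < L" using ij unfolding L_def by simp
    define cs where "cs = map (\<lambda>t. p (i + t)) [0..<L]"
    have lcs: "length cs = L" unfolding cs_def by simp
    have cs_nth: "\<And>t. t < L \<Longrightarrow> cs ! t = p (i + t)" unfolding cs_def by simp
    have arc: "\<And>t. t < n \<Longrightarrow> E (p t) (p (Suc t))" using less.prems(1) unfolding walk_def by simp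
    have cs_next: "\<And>t. t < L \<Longrightarrow> cs ! ((t + 1) mod L) = p (Suc (i + t))"
    proof -
      fix t assume t: "t < L"
      show "cs ! ((t + 1) mod L) = p (Suc (i + t))"
      proof (cases "t + 1 < L")
        case True then show ?thesis using cs_nth by simp
      next
        case False
        then have "t + 1 = L" using t by simp
        then have m0: "(t + 1) mod L = 0" by simp
        have "Suc (i + t) = j" using \<open>t + 1 = L\<close> ij unfolding L_def by simp
        then show ?thesis unfolding m0 using cs_nth[of 0] L0 ij by simp
      qed
    qed
    have gc: "gcyc E cs"
      unfolding gcyc_def
    proof (intro conjI allI impI)
      show "cs \<noteq> []" using L0 lcs by auto
      show "distinct cs" unfolding cs_def distinct_map
      proof
        show "distinct [0..<L]" by simp
        show "inj_on (\<lambda>t. p (i + t)) (set [0..<L])"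
          unfolding inj_on_def
        proof (intro ballI impI)
          fix a b assume ab: "a \<in> set [0..<L]" "b \<in> set [0..<L]" "p (i + a) = p (i + b)"
          show "a = b"
          proof (rule ccontr)
            assume "a \<noteq> b"
            then consider "a < b" | "b < a" by linarith
            then show False
            proof cases
              case 1
              have "i + b < j" using ab(2) unfolding L_def by auto
              then show ?thesis using minj[of "i + b" "i + a"] ab(3) 1 by auto
            next
              case 2
              have "i + a < j" using ab(1) unfolding L_def by auto
              then show ?thesis using minj[of "i + a" "i + b"] ab(3) 2 by auto
            qed
          qed
        qed
      qed
      fix t assume "t < length cs"
      then have t: "t < L" using lcs by simp
      then show "E (cs ! t) (cs ! ((t + 1) mod length cs))"
        using cs_nth cs_next arc[of "i + t"] jn unfolding lcs L_def by simp
    qed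
    have gw: "gcw w cs = (\<Sum>t\<in>{i..<j}. w (p t) (p (Suc t)))"
    proof -
      have "gcw w cs = (\<Sum>t<L. w (p (i + t)) (p (Suc (i + t))))"
        unfolding gcw_def lcs using cs_nth cs_next by (intro sum.cong) auto
      also have "\<dots> = (\<Sum>t\<in>{0..<L}. w (p (t + i)) (p (Suc (t + i))))" by (simp add: lessThan_atLeast0 add.commute)
      also have "\<dots> = (\<Sum>t\<in>{0 + i..<L + i}. w (p t) (p (Suc t)))" by (rule sum.shift_bounds_nat_ivl[symmetric])
      also have "{0 + i..<L + i} = {i..<j}" unfolding L_def using ij by auto
      finally show ?thesis .
    qed
    have reach: "(v, cs ! 0) \<in> (rel E)\<^sup>*"
      using walk_reach[OF less.prems(1), of i] less.prems(2) cs_nth[of 0] L0 ij jn by simp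
    have "cs ! 0 \<in> set cs" using L0 lcs by simp
    then have "gcyc E cs \<and> (\<exists>x\<in>set cs. (v, x) \<in> (rel E)\<^sup>*)" using gc reach by auto
    then have "gcw w cs \<le> c * length cs" using cyc[rule_format, of cs] by simp
    then have cw: "gcw w cs \<le> c * L" using lcs by simp
    define q where "q = (\<lambda>t. if t \<le> i then p t else p (t + L))"
    have q0: "q 0 = v" using less.prems(2) unfolding q_def by simp
    have qw: "walk E q (n - L)"
      unfolding walk_def
    proof (intro allI impI)
      fix t assume t: "t < n - L"
      show "E (q t) (q (Suc t))"
      proof (cases "t < i")
        case True then show ?thesis using arc[of t] ij jn unfolding q_def by simp
      next
        case False
        have "q t = p (t + L)"
        proof (cases "t = i")
          case True then show ?thesis using ij unfolding q_def L_def by simp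
        next
          case False then show ?thesis using \<open>\<not> t < i\<close> unfolding q_def by simp
        qed
        moreover have "q (Suc t) = p (Suc t + L)" using False unfolding q_def by simp
        ultimately show ?thesis using arc[of "t + L"] t by simp
      qed
    qed
    have IH: "wsum w q (n - L) \<le> c * (n - L) + ?K"
      using less.IH[OF _ qw q0] L0 jn ij unfolding L_def by simp
    have split: "wsum w p n = (\<Sum>t<i. w (p t) (p (Suc t))) + (\<Sum>t\<in>{i..<j}. w (p t) (p (Suc t))) + (\<Sum>t\<in>{j..<n}. w (p t) (p (Suc t)))"
      unfolding wsum_def using ij jn by (intro sum_split3) auto
    have qsplit: "wsum w q (n - L) = (\<Sum>t<i. w (p t) (p (Suc t))) + (\<Sum>t\<in>{j..<n}. w (p t) (p (Suc t)))"
    proof -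
      have "wsum w q (n - L) = (\<Sum>t<i. w (q t) (q (Suc t))) + (\<Sum>t\<in>{i..<i}. w (q t) (q (Suc t))) + (\<Sum>t\<in>{i..<n - L}. w (q t) (q (Suc t)))"
        unfolding wsum_def using ij jn unfolding L_def by (intro sum_split3) auto
      also have "(\<Sum>t<i. w (q t) (q (Suc t))) = (\<Sum>t<i. w (p t) (p (Suc t)))"
        unfolding q_def by (intro sum.cong) auto
      also have "(\<Sum>t\<in>{i..<n - L}. w (q t) (q (Suc t))) = (\<Sum>t\<in>{i..<n - L}. w (p (t + L)) (p (Suc t + L)))"
        using ij unfolding q_def L_def by (intro sum.cong) auto
      also have "\<dots> = (\<Sum>t\<in>{i + L..<n - L + L}. w (p t) (p (Suc t)))"
        by (subst sum.shift_bounds_nat_ivl) simp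
      also have "{i + L..<n - L + L} = {j..<n}" using ij jn unfolding L_def by auto
      finally show ?thesis by simp
    qed
    have "real (n - L) = real n - real L" using jn ij unfolding L_def by simp
    then show ?thesis using IH split qsplit gw cw by (simp add: algebra_simps)
  qed
qed



definition Aset :: "nat \<Rightarrow> (nat \<Rightarrow> nat \<Rightarrow> ereal) \<Rightarrow> nat \<Rightarrow> nat set" where
  "Aset M A j = {k. k < M \<and> A k j \<noteq> -\<infinity>}"
definition Bset :: "nat \<Rightarrow> (nat \<Rightarrow> nat \<Rightarrow> ereal) \<Rightarrow> nat \<Rightarrow> nat set" where
  "Bset N B k = {l. l < N \<and> B k l \<noteq> -\<infinity>}"
definition rv :: "nat \<Rightarrow> (nat \<Rightarrow> nat \<Rightarrow> ereal) \<Rightarrow> (nat \<Rightarrow> real) \<Rightarrow> nat \<Rightarrow> real" where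
  "rv N B x k = Max ((\<lambda>l. real_of_ereal (B k l) + x l) ` Bset N B k)"
definition Gop :: "nat \<Rightarrow> nat \<Rightarrow> (nat \<Rightarrow> nat \<Rightarrow> ereal) \<Rightarrow> (nat \<Rightarrow> nat \<Rightarrow> ereal) \<Rightarrow> real
   \<Rightarrow> (nat \<Rightarrow> real) \<Rightarrow> nat \<Rightarrow> real" where
  "Gop M N A B \<alpha> x = (\<lambda>j. if j < N then Min ((\<lambda>k. - real_of_ereal (A k j) + \<alpha> * rv N B x k) ` Aset M A j) else 0)"

lemma sharp_Gop: "sharp_map M N A B = Gop M N A B 1"
  unfolding sharp_map_def Gop_def rv_def Aset_def Bset_def
  by (intro ext) (simp add: setcompr_eq_image)

lemma fin_Aset: "finite (Aset M A j)" unfolding Aset_def by simp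
lemma fin_Bset: "finite (Bset N B k)" unfolding Bset_def by simp

lemma rv_ge: "l \<in> Bset N B k \<Longrightarrow> real_of_ereal (B k l) + x l \<le> rv N B x k"
  unfolding rv_def using fin_Bset by (intro Max_ge) auto

lemma G_le: "j < N \<Longrightarrow> k \<in> Aset M A j \<Longrightarrow> Gop M N A B \<alpha> x j \<le> - real_of_ereal (A k j) + \<alpha> * rv N B x k"
  unfolding Gop_def using fin_Aset by (simp add: Min_le)

locale game =
  fixes M N :: nat and A B :: "nat \<Rightarrow> nat \<Rightarrow> ereal"
  assumes colA: "\<forall>j<N. \<exists>k<M. A k j \<noteq> -\<infinity>"
    and rowB: "\<forall>k<M. \<exists>l<N. B k l \<noteq> -\<infinity>"
begin

lemma Aset_ne: "j < N \<Longrightarrow> Aset M A j \<noteq> {}" using colA unfolding Aset_def by auto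
lemma Bset_ne: "k < M \<Longrightarrow> Bset N B k \<noteq> {}" using rowB unfolding Bset_def by auto

lemma rv_ex: "k < M \<Longrightarrow> \<exists>l\<in>Bset N B k. rv N B x k = real_of_ereal (B k l) + x l"
proof -
  assume "k < M"
  then have "rv N B x k \<in> (\<lambda>l. real_of_ereal (B k l) + x l) ` Bset N B k"
    unfolding rv_def using fin_Bset Bset_ne by (intro Max_in) auto
  then show ?thesis by auto
qed

lemma G_ex: "j < N \<Longrightarrow> \<exists>k\<in>Aset M A j. Gop M N A B \<alpha> x j = - real_of_ereal (A k j) + \<alpha> * rv N B x k"
proof -
  assume j: "j < N"
  then have "Gop M N A B \<alpha> x j \<in> (\<lambda>k. - real_of_ereal (A k j) + \<alpha> * rv N B x k) ` Aset M A j"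
    unfolding Gop_def using fin_Aset Aset_ne by (simp add: Min_in)
  then show ?thesis by auto
qed

lemma rv_shift:
  assumes "k < M" "\<forall>l<N. x l \<le> y l + D"
  shows "rv N B x k \<le> rv N B y k + D"
proof -
  obtain l where l: "l \<in> Bset N B k" "rv N B x k = real_of_ereal (B k l) + x l" using rv_ex assms(1) by blast
  have "l < N" using l(1) unfolding Bset_def by simp
  then have "rv N B x k \<le> real_of_ereal (B k l) + y l + D" using l(2) assms(2) by simp
  also have "\<dots> \<le> rv N B y k + D" using rv_ge[OF l(1)] by simp
  finally show ?thesis .
qed

lemma G_shift:
  assumes "0 \<le> \<alpha>" "\<forall>l<N. x l \<le> y l + D" "j < N"
  shows "Gop M N A B \<alpha> x j \<le> Gop M N A B \<alpha> y j + \<alpha> * D"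
proof -
  obtain k where k: "k \<in> Aset M A j" "Gop M N A B \<alpha> y j = - real_of_ereal (A k j) + \<alpha> * rv N B y k"
    using G_ex assms(3) by blast
  have kM: "k < M" using k(1) unfolding Aset_def by simp
  have "Gop M N A B \<alpha> x j \<le> - real_of_ereal (A k j) + \<alpha> * rv N B x k" using G_le[OF assms(3) k(1)] .
  also have "\<alpha> * rv N B x k \<le> \<alpha> * (rv N B y k + D)" using rv_shift[OF kM assms(2)] assms(1) by (intro mult_left_mono)
  finally show ?thesis using k(2) by (simp add: algebra_simps)
qed

lemma sharp_mono:
  assumes "\<forall>l<N. x l \<le> y l" "j < N"
  shows "sharp_map M N A B x j \<le> sharp_map M N A B y j"
  using G_shift[of 1 x y 0 j] assms unfolding sharp_Gop by simp

lemma iter_walk: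
  "j < N \<Longrightarrow> \<exists>p. p 0 = MinN j \<and> walk (gg_arc M N A B) p (2 * k)
     \<and> (sharp_map M N A B ^^ k) (\<lambda>_. 0) j = wsum (gg_weight A B) p (2 * k)"
proof (induction k arbitrary: j)
  case 0
  then show ?case by (intro exI[of _ "\<lambda>_. MinN j"]) (simp add: walk_def wsum_def)
next
  case (Suc k)
  let ?x = "(sharp_map M N A B ^^ k) (\<lambda>_. 0)"
  obtain k' where k': "k' \<in> Aset M A j" "Gop M N A B 1 ?x j = - real_of_ereal (A k' j) + 1 * rv N B ?x k'"
    using G_ex Suc.prems by blast
  have k'M: "k' < M" "A k' j \<noteq> -\<infinity>" using k'(1) unfolding Aset_def by auto
  obtain l where l: "l \<in> Bset N B k'" "rv N B ?x k' = real_of_ereal (B k' l) + ?x l" using rv_ex k'M by blast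
  have lN: "l < N" "B k' l \<noteq> -\<infinity>" using l(1) unfolding Bset_def by auto
  obtain p where p: "p 0 = MinN l" "walk (gg_arc M N A B) p (2 * k)"
     "?x l = wsum (gg_weight A B) p (2 * k)" using Suc.IH[OF lN(1)] by blast
  define p' where "p' = (\<lambda>t. if t = 0 then MinN j else if t = 1 then MaxN k' else p (t - 2))"
  have p'0: "p' 0 = MinN j" unfolding p'_def by simp
  have p'w: "walk (gg_arc M N A B) p' (2 * Suc k)"
    unfolding walk_def
  proof (intro allI impI)
    fix t assume t: "t < 2 * Suc k"
    consider "t = 0" | "t = 1" | "t \<ge> 2" by linarith
    then show "gg_arc M N A B (p' t) (p' (Suc t))"
    proof cases
      case 1 then show ?thesis unfolding p'_def using Suc.prems k'M by simp
    next
      case 2 then show ?thesis unfolding p'_def using p(1) lN k'M by simp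
    next
      case 3
      have e: "Suc t - 2 = Suc (t - 2)" using 3 by simp
      from 3 have "p' t = p (t - 2)" "p' (Suc t) = p (Suc (t - 2))" unfolding p'_def
        by (simp_all only: e) auto
      moreover have "t - 2 < 2 * k" using t 3 by simp
      ultimately show ?thesis using p(2) unfolding walk_def by simp
    qed
  qed
  have "wsum (gg_weight A B) p' (2 * Suc k)
      = gg_weight A B (p' 0) (p' 1) + gg_weight A B (p' 1) (p' 2) + wsum (gg_weight A B) p (2 * k)"
  proof -
    have "wsum (gg_weight A B) p' (2 * Suc k) = (\<Sum>t<Suc (Suc (2 * k)). gg_weight A B (p' t) (p' (Suc t)))"
      unfolding wsum_def by simp
    also have "\<dots> = gg_weight A B (p' 0) (p' 1) + (gg_weight A B (p' 1) (p' 2) + (\<Sum>t<2 * k. gg_weight A B (p' (Suc (Suc t))) (p' (Suc (Suc (Suc t))))))"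
      by (simp only: sum.lessThan_Suc_shift) (simp add: numeral_2_eq_2)
    also have "(\<Sum>t<2 * k. gg_weight A B (p' (Suc (Suc t))) (p' (Suc (Suc (Suc t))))) = wsum (gg_weight A B) p (2 * k)"
      unfolding wsum_def p'_def by simp
    finally show ?thesis by simp
  qed
  moreover have "(sharp_map M N A B ^^ Suc k) (\<lambda>_. 0) j = - real_of_ereal (A k' j) + real_of_ereal (B k' l) + ?x l"
    using k'(2) l(2) unfolding sharp_Gop by simp
  moreover have "gg_weight A B (p' 0) (p' 1) = - real_of_ereal (A k' j)" unfolding p'_def by simp
  moreover have "gg_weight A B (p' 1) (p' 2) = real_of_ereal (B k' l)" unfolding p'_def using p(1) by simp
  ultimately show ?case using p'0 p'w p(3) by (intro exI[of _ p']) simp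
qed

end

lemma iter_compare:
  fixes f g :: "(nat \<Rightarrow> real) \<Rightarrow> nat \<Rightarrow> real"
  assumes "\<forall>x j. j < N \<longrightarrow> g x j \<le> f x j"
    and "\<forall>x y j. (\<forall>l<N. x l \<le> y l) \<longrightarrow> j < N \<longrightarrow> f x j \<le> f y j"
  shows "j < N \<Longrightarrow> (g ^^ k) (\<lambda>_. 0) j \<le> (f ^^ k) (\<lambda>_. (0::real)) j"
proof (induction k arbitrary: j)
  case 0 then show ?case by simp
next
  case (Suc k)
  have "g ((g ^^ k) (\<lambda>_. 0)) j \<le> f ((g ^^ k) (\<lambda>_. 0)) j" using assms(1) Suc.prems by blast
  also have "\<dots> \<le> f ((f ^^ k) (\<lambda>_. 0)) j" using assms(2) Suc.IH Suc.prems by blast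
  finally show ?case by simp
qed

definition restrictB :: "(nat \<Rightarrow> nat) \<Rightarrow> (nat \<Rightarrow> nat \<Rightarrow> ereal) \<Rightarrow> nat \<Rightarrow> nat \<Rightarrow> ereal" where
  "restrictB \<sigma> B k l = (if l = \<sigma> k then B k l else -\<infinity>)"

definition max_strategy :: "nat \<Rightarrow> nat \<Rightarrow> (nat \<Rightarrow> nat \<Rightarrow> ereal) \<Rightarrow> (nat \<Rightarrow> nat) \<Rightarrow> bool" where
  "max_strategy M N B \<sigma> \<longleftrightarrow> (\<forall>k<M. \<sigma> k < N \<and> B k (\<sigma> k) \<noteq> -\<infinity>)"

context game begin

lemma game_tau: "min_strategy M N A \<tau> \<Longrightarrow> game M N (restrict_strat N A \<tau>) B"
  unfolding game_def min_strategy_def restrict_strat_def using rowB by auto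

lemma game_sigma: "max_strategy M N B \<sigma> \<Longrightarrow> game M N A (restrictB \<sigma> B)"
  unfolding game_def max_strategy_def restrictB_def using colA by auto

lemma sharp_le_tau:
  assumes "min_strategy M N A \<tau>" "j < N"
  shows "sharp_map M N A B x j \<le> sharp_map M N (restrict_strat N A \<tau>) B x j"
proof -
  have "Aset M (restrict_strat N A \<tau>) j = {\<tau> j}"
    using assms unfolding Aset_def min_strategy_def restrict_strat_def by auto
  then have "sharp_map M N (restrict_strat N A \<tau>) B x j = - real_of_ereal (A (\<tau> j) j) + rv N B x (\<tau> j)"
    unfolding sharp_Gop Gop_def using assms(2) by (simp add: restrict_strat_def)
  moreover have "\<tau> j \<in> Aset M A j" using assms unfolding min_strategy_def Aset_def by auto
  moreover have "Gop M N A B 1 x j \<le> - real_of_ereal (A (\<tau> j) j) + 1 * rv N B x (\<tau> j)"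
    using G_le[OF assms(2) \<open>\<tau> j \<in> Aset M A j\<close>] .
  ultimately show ?thesis unfolding sharp_Gop by simp
qed

lemma sharp_ge_sigma:
  assumes "max_strategy M N B \<sigma>" "j < N"
  shows "sharp_map M N A (restrictB \<sigma> B) x j \<le> sharp_map M N A B x j"
proof -
  obtain k where k: "k \<in> Aset M A j" "Gop M N A B 1 x j = - real_of_ereal (A k j) + 1 * rv N B x k"
    using G_ex assms(2) by blast
  have kM: "k < M" using k(1) unfolding Aset_def by simp
  have "Bset N (restrictB \<sigma> B) k = {\<sigma> k}"
    using assms kM unfolding Bset_def max_strategy_def restrictB_def by auto
  then have "rv N (restrictB \<sigma> B) x k = real_of_ereal (B k (\<sigma> k)) + x (\<sigma> k)"
    unfolding rv_def by (simp add: restrictB_def)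
  also have "\<dots> \<le> rv N B x k" using assms kM unfolding max_strategy_def by (intro rv_ge) (simp add: Bset_def)
  finally have "rv N (restrictB \<sigma> B) x k \<le> rv N B x k" .
  moreover have "Gop M N A (restrictB \<sigma> B) 1 x j \<le> - real_of_ereal (A k j) + 1 * rv N (restrictB \<sigma> B) x k"
    using G_le[OF assms(2) k(1)] .
  ultimately show ?thesis unfolding sharp_Gop using k(2) by simp
qed

end



context game begin

definition Fd :: "real \<Rightarrow> (nat \<Rightarrow> real) \<Rightarrow> nat \<Rightarrow> real" where
  "Fd \<delta> x = Gop M N A B \<delta> (\<lambda>l. \<delta> * x l)"

lemma Fd_contr:
  assumes d: "0 \<le> \<delta>" "\<delta> \<le> 1" and D: "\<forall>l<N. \<bar>x l - y l\<bar> \<le> D" and j: "j < N"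
  shows "\<bar>Fd \<delta> x j - Fd \<delta> y j\<bar> \<le> \<delta> * D"
proof -
  have D0: "0 \<le> D" using D j by force
  have "\<forall>l<N. \<delta> * x l \<le> \<delta> * y l + \<delta> * D"
  proof (intro allI impI)
    fix l assume "l < N"
    then have "x l \<le> y l + D" using D by force
    then have "\<delta> * x l \<le> \<delta> * (y l + D)" using d by (intro mult_left_mono)
    then show "\<delta> * x l \<le> \<delta> * y l + \<delta> * D" by (simp add: algebra_simps)
  qed
  then have a: "Fd \<delta> x j \<le> Fd \<delta> y j + \<delta> * (\<delta> * D)" unfolding Fd_def
    using G_shift[OF d(1), of "\<lambda>l. \<delta> * x l" "\<lambda>l. \<delta> * y l" "\<delta> * D" j] j by simp
  have "\<forall>l<N. \<delta> * y l \<le> \<delta> * x l + \<delta> * D"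
  proof (intro allI impI)
    fix l assume "l < N"
    then have "y l \<le> x l + D" using D by force
    then have "\<delta> * y l \<le> \<delta> * (x l + D)" using d by (intro mult_left_mono)
    then show "\<delta> * y l \<le> \<delta> * x l + \<delta> * D" by (simp add: algebra_simps)
  qed
  then have b: "Fd \<delta> y j \<le> Fd \<delta> x j + \<delta> * (\<delta> * D)" unfolding Fd_def
    using G_shift[OF d(1), of "\<lambda>l. \<delta> * y l" "\<lambda>l. \<delta> * x l" "\<delta> * D" j] j by simp
  have "\<delta> * (\<delta> * D) \<le> 1 * (\<delta> * D)" using d D0 by (intro mult_right_mono) auto
  then show ?thesis using a b by simp
qed

lemma approx_fix:
  assumes d: "0 < \<delta>" "\<delta> < 1" and e: "0 < \<epsilon>"
  shows "\<exists>h. \<forall>l<N. \<bar>Fd \<delta> h l - h l\<bar> \<le> \<epsilon>"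
proof -
  define z where "z n = (Fd \<delta> ^^ n) (\<lambda>_. 0)" for n
  define D0 where "D0 = (\<Sum>l<N. \<bar>z 1 l\<bar>)"
  have D00: "0 \<le> D0" unfolding D0_def by (simp add: sum_nonneg)
  have step: "\<forall>l<N. \<bar>z (Suc n) l - z n l\<bar> \<le> \<delta>^n * D0" for n
  proof (induction n)
    case 0
    show ?case
    proof (intro allI impI)
      fix l assume "l < N"
      then have "\<bar>z 1 l\<bar> \<le> D0" unfolding D0_def by (intro member_le_sum) auto
      moreover have "z 0 l = 0" unfolding z_def by simp
      ultimately show "\<bar>z (Suc 0) l - z 0 l\<bar> \<le> \<delta>^0 * D0" by simp
    qed
  next
    case (Suc n)
    show ?case
    proof (intro allI impI)
      fix l assume l: "l < N"
      have "z (Suc (Suc n)) = Fd \<delta> (z (Suc n))" "z (Suc n) = Fd \<delta> (z n)" unfolding z_def by simp_all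
      then have "\<bar>z (Suc (Suc n)) l - z (Suc n) l\<bar> \<le> \<delta> * (\<delta>^n * D0)"
        using Fd_contr[of \<delta> "z (Suc n)" "z n" "\<delta>^n * D0" l] d Suc.IH l by simp
      then show "\<bar>z (Suc (Suc n)) l - z (Suc n) l\<bar> \<le> \<delta>^Suc n * D0" by simp
    qed
  qed
  obtain n where n: "\<delta>^n < \<epsilon> / (D0 + 1)" using real_arch_pow_inv[of "\<epsilon> / (D0 + 1)" \<delta>] e d D00 by auto
  have "\<delta>^n * D0 \<le> \<delta>^n * (D0 + 1)" using d by simp
  also have "\<dots> < \<epsilon> / (D0 + 1) * (D0 + 1)" using n D00 by (intro mult_strict_right_mono) auto
  also have "\<dots> = \<epsilon>" using D00 by simp
  finally have "\<delta>^n * D0 \<le> \<epsilon>" by simp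
  then have "\<forall>l<N. \<bar>z (Suc n) l - z n l\<bar> \<le> \<epsilon>" using step[of n] by force
  moreover have "z (Suc n) = Fd \<delta> (z n)" unfolding z_def by simp
  ultimately show ?thesis by auto
qed

definition good :: "real \<Rightarrow> real \<Rightarrow> (nat \<Rightarrow> nat) \<Rightarrow> (nat \<Rightarrow> nat) \<Rightarrow> (gnode \<Rightarrow> real) \<Rightarrow> bool" where
  "good \<delta> \<epsilon> \<sigma> \<tau> H \<longleftrightarrow>
     min_strategy M N A \<tau> \<and> (\<forall>j. \<not> j < N \<longrightarrow> \<tau> j = 0) \<and>
     max_strategy M N B \<sigma> \<and> (\<forall>k. \<not> k < M \<longrightarrow> \<sigma> k = 0) \<and>
     (\<forall>u v. gg_arc M N (restrict_strat N A \<tau>) B u v \<longrightarrow>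
        (gg_weight (restrict_strat N A \<tau>) B u v - \<epsilon>) + \<delta> * H v \<le> H u) \<and>
     (\<forall>u v. gg_arc M N A (restrictB \<sigma> B) u v \<longrightarrow>
        (- (gg_weight A (restrictB \<sigma> B) u v + \<epsilon>)) + \<delta> * (- H v) \<le> - H u)"

lemma exists_good:
  assumes d: "0 < \<delta>" "\<delta> < 1" and e: "0 < \<epsilon>"
  shows "\<exists>\<sigma> \<tau> H. good \<delta> \<epsilon> \<sigma> \<tau> H"
proof -
  obtain h where h: "\<forall>l<N. \<bar>Fd \<delta> h l - h l\<bar> \<le> \<epsilon>" using approx_fix[OF d e] by blast
  let ?y = "\<lambda>l. \<delta> * h l"
  define \<tau> where "\<tau> j = (if j < N then (SOME k. k \<in> Aset M A j \<and> Fd \<delta> h j = - real_of_ereal (A k j) + \<delta> * rv N B ?y k) else 0)" for j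
  define \<sigma> where "\<sigma> k = (if k < M then (SOME l. l \<in> Bset N B k \<and> rv N B ?y k = real_of_ereal (B k l) + ?y l) else 0)" for k
  define H where "H u = (case u of MinN j \<Rightarrow> h j | MaxN k \<Rightarrow> rv N B ?y k)" for u
  have tau: "\<tau> j \<in> Aset M A j \<and> Fd \<delta> h j = - real_of_ereal (A (\<tau> j) j) + \<delta> * rv N B ?y (\<tau> j)" if "j < N" for j
  proof -
    have "\<exists>k. k \<in> Aset M A j \<and> Fd \<delta> h j = - real_of_ereal (A k j) + \<delta> * rv N B ?y k"
      using G_ex[OF that] unfolding Fd_def by blast
    from someI_ex[OF this] show ?thesis unfolding \<tau>_def using that by simp
  qed
  have sigma: "\<sigma> k \<in> Bset N B k \<and> rv N B ?y k = real_of_ereal (B k (\<sigma> k)) + ?y (\<sigma> k)" if "k < M" for k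
  proof -
    have "\<exists>l. l \<in> Bset N B k \<and> rv N B ?y k = real_of_ereal (B k l) + ?y l"
      using rv_ex[OF that] by blast
    from someI_ex[OF this] show ?thesis unfolding \<sigma>_def using that by simp
  qed
  have ms: "min_strategy M N A \<tau>" unfolding min_strategy_def using tau unfolding Aset_def by auto
  have xs: "max_strategy M N B \<sigma>" unfolding max_strategy_def using sigma unfolding Bset_def by auto
  have c1: "\<forall>u v. gg_arc M N (restrict_strat N A \<tau>) B u v \<longrightarrow>
        (gg_weight (restrict_strat N A \<tau>) B u v - \<epsilon>) + \<delta> * H v \<le> H u"
  proof (intro allI impI)
    fix u v assume arc: "gg_arc M N (restrict_strat N A \<tau>) B u v"
    show "(gg_weight (restrict_strat N A \<tau>) B u v - \<epsilon>) + \<delta> * H v \<le> H u"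
    proof (cases u)
      case (MaxN k)
      then obtain l where v: "v = MinN l" using arc by (cases v) auto
      then have "l \<in> Bset N B k" using arc MaxN unfolding Bset_def by simp
      then have "real_of_ereal (B k l) + ?y l \<le> rv N B ?y k" by (rule rv_ge)
      then show ?thesis using MaxN v e unfolding H_def by simp
    next
      case (MinN j)
      then obtain i where v: "v = MaxN i" using arc by (cases v) auto
      have ij: "j < N" "i = \<tau> j" using arc MinN v unfolding restrict_strat_def by (auto split: if_splits)
      have "h j \<ge> Fd \<delta> h j - \<epsilon>" using h ij(1) by force
      then show ?thesis using tau[OF ij(1)] MinN v ij unfolding H_def by (simp add: restrict_strat_def)
    qed
  qed
  have c2: "\<forall>u v. gg_arc M N A (restrictB \<sigma> B) u v \<longrightarrow>
        (- (gg_weight A (restrictB \<sigma> B) u v + \<epsilon>)) + \<delta> * (- H v) \<le> - H u"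
  proof (intro allI impI)
    fix u v assume arc: "gg_arc M N A (restrictB \<sigma> B) u v"
    show "(- (gg_weight A (restrictB \<sigma> B) u v + \<epsilon>)) + \<delta> * (- H v) \<le> - H u"
    proof (cases u)
      case (MaxN k)
      then obtain l where v: "v = MinN l" using arc by (cases v) auto
      have kl: "k < M" "l = \<sigma> k" using arc MaxN v unfolding restrictB_def by (auto split: if_splits)
      then show ?thesis using sigma[OF kl(1)] MaxN v e unfolding H_def by (simp add: restrictB_def)
    next
      case (MinN j)
      then obtain i where v: "v = MaxN i" using arc by (cases v) auto
      have ij: "j < N" "i \<in> Aset M A j" using arc MinN v unfolding Aset_def by auto
      have "h j \<le> Fd \<delta> h j + \<epsilon>" using h ij(1) by force
      moreover have "Fd \<delta> h j \<le> - real_of_ereal (A i j) + \<delta> * rv N B ?y i"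
        unfolding Fd_def using G_le[OF ij] .
      ultimately show ?thesis using MinN v unfolding H_def by simp
    qed
  qed
  have "good \<delta> \<epsilon> \<sigma> \<tau> H" unfolding good_def using ms xs c1 c2 unfolding \<tau>_def \<sigma>_def by auto
  then show ?thesis by blast
qed

end



lemma lim_expr:
  fixes d e a b :: "nat \<Rightarrow> real"
  assumes d: "d \<longlonglongrightarrow> 1" and e: "e \<longlonglongrightarrow> 0" and L: "0 < L"
  shows "(\<lambda>k. (1 - d k) * (\<Sum>t<s. d k ^ t * (a t + e k))
      + d k ^ s * (\<Sum>t<L. d k ^ t * (b t + e k)) / (\<Sum>t<L. d k ^ t)) \<longlonglongrightarrow> (\<Sum>t<L. b t) / real L"
proof -
  have "(\<lambda>k. (1 - d k) * (\<Sum>t<s. d k ^ t * (a t + e k))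
      + d k ^ s * (\<Sum>t<L. d k ^ t * (b t + e k)) / (\<Sum>t<L. d k ^ t))
     \<longlonglongrightarrow> (1 - 1) * (\<Sum>t<s. 1 ^ t * (a t + 0)) + 1 ^ s * (\<Sum>t<L. 1 ^ t * (b t + 0)) / (\<Sum>t<L. (1::real) ^ t)"
    using L by (intro tendsto_intros d e) auto
  then show ?thesis by simp
qed

lemma lim_le_inf:
  fixes X Y :: "nat \<Rightarrow> real"
  assumes "X \<longlonglongrightarrow> a" "Y \<longlonglongrightarrow> b" "infinite I" "\<forall>k\<in>I. X k \<le> Y k"
  shows "a \<le> b"
proof (rule ccontr)
  assume "\<not> a \<le> b"
  then have "0 < a - b" by simp
  moreover have "(\<lambda>k. X k - Y k) \<longlonglongrightarrow> a - b" using assms(1,2) by (intro tendsto_intros)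
  ultimately have "eventually (\<lambda>k. 0 < X k - Y k) sequentially" using order_tendstoD(1) by blast
  then obtain K where K: "\<And>k. k \<ge> K \<Longrightarrow> 0 < X k - Y k" unfolding eventually_sequentially by blast
  obtain k where "k \<in> I" "k \<ge> K" using assms(3) unfolding infinite_nat_iff_unbounded_le by blast
  then show False using K assms(4) by force
qed

context game begin

lemma goodD:
  assumes "good \<delta> \<epsilon> \<sigma> \<tau> H"
  shows "min_strategy M N A \<tau>" "\<forall>j. \<not> j < N \<longrightarrow> \<tau> j = 0"
    "max_strategy M N B \<sigma>" "\<forall>k. \<not> k < M \<longrightarrow> \<sigma> k = 0"
    "\<forall>u v. gg_arc M N (restrict_strat N A \<tau>) B u v \<longrightarrow>
        (gg_weight (restrict_strat N A \<tau>) B u v - \<epsilon>) + \<delta> * H v \<le> H u"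
    "\<forall>u v. gg_arc M N A (restrictB \<sigma> B) u v \<longrightarrow>
        (- (gg_weight A (restrictB \<sigma> B) u v + \<epsilon>)) + \<delta> * (- H v) \<le> - H u"
proof -
  note a = assms[unfolded good_def]
  show "min_strategy M N A \<tau>" using a by (elim conjE)
  show "\<forall>j. \<not> j < N \<longrightarrow> \<tau> j = 0" using a by (elim conjE)
  show "max_strategy M N B \<sigma>" using a by (elim conjE)
  show "\<forall>k. \<not> k < M \<longrightarrow> \<sigma> k = 0" using a by (elim conjE)
  show "\<forall>u v. gg_arc M N (restrict_strat N A \<tau>) B u v \<longrightarrow>
        (gg_weight (restrict_strat N A \<tau>) B u v - \<epsilon>) + \<delta> * H v \<le> H u" using a by (elim conjE)
  show "\<forall>u v. gg_arc M N A (restrictB \<sigma> B) u v \<longrightarrow>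
        (- (gg_weight A (restrictB \<sigma> B) u v + \<epsilon>)) + \<delta> * (- H v) \<le> - H u" using a by (elim conjE)
qed

abbreviation "Gt \<tau> \<equiv> gg_arc M N (restrict_strat N A \<tau>) B"
abbreviation "wt \<tau> \<equiv> gg_weight (restrict_strat N A \<tau>) B"
abbreviation "Gs \<sigma> \<equiv> gg_arc M N A (restrictB \<sigma> B)"
abbreviation "ws \<sigma> \<equiv> gg_weight A (restrictB \<sigma> B)"

theorem value_strats:
  "\<exists>\<sigma> \<tau>. min_strategy M N A \<tau> \<and> (\<forall>j. \<not> j < N \<longrightarrow> \<tau> j = 0) \<and> max_strategy M N B \<sigma> \<and>
    (\<forall>j<N. \<forall>C1 C2 x1 x2. gcyc (Gt \<tau>) C1 \<and> x1 \<in> set C1 \<and> (MinN j, x1) \<in> (rel (Gt \<tau>))\<^sup>* \<and>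
        gcyc (Gs \<sigma>) C2 \<and> x2 \<in> set C2 \<and> (MinN j, x2) \<in> (rel (Gs \<sigma>))\<^sup>* \<longrightarrow>
        gcw (wt \<tau>) C1 / length C1 \<le> gcw (ws \<sigma>) C2 / length C2)"
proof -
  define ee where "ee k = inverse (real (Suc k))" for k
  define dd where "dd k = 1 - ee (Suc k)" for k
  have ee0: "ee \<longlonglongrightarrow> 0" unfolding ee_def by (rule LIMSEQ_inverse_real_of_nat)
  have dd1: "dd \<longlonglongrightarrow> 1"
  proof -
    have "(\<lambda>k. ee (Suc k)) \<longlonglongrightarrow> 0" using ee0 by (rule LIMSEQ_Suc)
    then have "(\<lambda>k. 1 - ee (Suc k)) \<longlonglongrightarrow> 1 - 0" by (intro tendsto_intros)
    then show ?thesis unfolding dd_def by simp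
  qed
  have eep: "0 < ee k" for k unfolding ee_def by simp
  have ddp: "0 < dd k" "dd k < 1" for k unfolding dd_def ee_def by (auto simp: field_simps)
  define F where "F k = (SOME x. good (dd k) (ee k) (fst x) (fst (snd x)) (snd (snd x)))" for k
  have Fg: "good (dd k) (ee k) (fst (F k)) (fst (snd (F k))) (snd (snd (F k)))" for k
  proof -
    obtain \<sigma> \<tau> H where "good (dd k) (ee k) \<sigma> \<tau> H" using exists_good[OF ddp(1) ddp(2) eep] by blast
    then have "\<exists>x. good (dd k) (ee k) (fst x) (fst (snd x)) (snd (snd x))" by (intro exI[of _ "(\<sigma>, \<tau>, H)"]) simp
    from someI_ex[OF this] show ?thesis unfolding F_def .
  qed
  define g where "g k = (fst (F k), fst (snd (F k)))" for k
  define SS where "SS = {f. \<forall>x. (x \<in> {..<M} \<longrightarrow> f x \<in> {..<N}) \<and> (x \<notin> {..<M} \<longrightarrow> f x = (0::nat))}"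
  define TT where "TT = {f. \<forall>x. (x \<in> {..<N} \<longrightarrow> f x \<in> {..<M}) \<and> (x \<notin> {..<N} \<longrightarrow> f x = (0::nat))}"
  have "finite SS" unfolding SS_def by (intro finite_set_of_finite_funs) auto
  moreover have "finite TT" unfolding TT_def by (intro finite_set_of_finite_funs) auto
  ultimately have finST: "finite (SS \<times> TT)" by simp
  have "range g \<subseteq> SS \<times> TT"
  proof
    fix y assume "y \<in> range g"
    then obtain k where k: "y = g k" by auto
    from Fg[of k] show "y \<in> SS \<times> TT" unfolding k g_def good_def SS_def TT_def min_strategy_def max_strategy_def
      by auto
  qed
  then have "finite (range g)" using finST finite_subset by blast
  then have "\<exists>y\<in>range g. infinite (g -` {y})" by (intro inf_img_fin_dom) auto
  then obtain y where infI: "infinite (g -` {y})" by blast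
  obtain \<sigma> \<tau> where y: "y = (\<sigma>, \<tau>)" by (cases y)
  define I where "I = g -` {y}"
  have goodI: "good (dd k) (ee k) \<sigma> \<tau> (snd (snd (F k)))" if "k \<in> I" for k
    using Fg[of k] that unfolding I_def g_def y by simp
  obtain k0 where "k0 \<in> I" using infI unfolding I_def by (metis finite.emptyI ex_in_conv)
  note g0 = goodD[OF goodI[OF this]]
  show ?thesis
  proof (rule exI[of _ \<sigma>], rule exI[of _ \<tau>], intro conjI allI impI)
    show "min_strategy M N A \<tau>" using g0(1) .
  next
    show "max_strategy M N B \<sigma>" using g0(3) .
  next
    fix j assume "\<not> j < N" then show "\<tau> j = 0" using g0(2) by simp
  next
    fix j C1 C2 x1 x2
    assume "j < N" and H: "gcyc (Gt \<tau>) C1 \<and> x1 \<in> set C1 \<and> (MinN j, x1) \<in> (rel (Gt \<tau>))\<^sup>* \<and>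
        gcyc (Gs \<sigma>) C2 \<and> x2 \<in> set C2 \<and> (MinN j, x2) \<in> (rel (Gs \<sigma>))\<^sup>*"
    from H have c1: "gcyc (Gt \<tau>) C1" by (elim conjE)
    from H have c2: "gcyc (Gs \<sigma>) C2" by (elim conjE)
    from H have h1: "x1 \<in> set C1" by (elim conjE)
    from H have h2: "x2 \<in> set C2" by (elim conjE)
    from H have r1: "(MinN j, x1) \<in> (rel (Gt \<tau>))\<^sup>*" by (elim conjE)
    from H have r2: "(MinN j, x2) \<in> (rel (Gs \<sigma>))\<^sup>*" by (elim conjE)
    have "(MinN j, C1 ! 0) \<in> (rel (Gt \<tau>))\<^sup>*" by (rule cyc_access_reach0[OF c1 h1 r1])
    from reach_walk[OF this] obtain p1 s1 where p1: "p1 0 = MinN j" "p1 s1 = C1 ! 0" "walk (Gt \<tau>) p1 s1"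
      by (elim exE conjE)
    have "(MinN j, C2 ! 0) \<in> (rel (Gs \<sigma>))\<^sup>*" by (rule cyc_access_reach0[OF c2 h2 r2])
    from reach_walk[OF this] obtain p2 s2 where p2: "p2 0 = MinN j" "p2 s2 = C2 ! 0" "walk (Gs \<sigma>) p2 s2"
      by (elim exE conjE)
    define L1 where "L1 = length C1"
    define L2 where "L2 = length C2"
    have L1: "0 < L1" unfolding L1_def using gcyc_len[OF c1] .
    have L2: "0 < L2" unfolding L2_def using gcyc_len[OF c2] .
    define X where "X k = (1 - dd k) * (\<Sum>t<s1. dd k ^ t * (wt \<tau> (p1 t) (p1 (Suc t)) + - ee k))
      + dd k ^ s1 * (\<Sum>t<L1. dd k ^ t * (wt \<tau> (C1 ! t) (C1 ! ((t + 1) mod L1)) + - ee k)) / (\<Sum>t<L1. dd k ^ t)" for k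
    define Y where "Y k = (1 - dd k) * (\<Sum>t<s2. dd k ^ t * (ws \<sigma> (p2 t) (p2 (Suc t)) + ee k))
      + dd k ^ s2 * (\<Sum>t<L2. dd k ^ t * (ws \<sigma> (C2 ! t) (C2 ! ((t + 1) mod L2)) + ee k)) / (\<Sum>t<L2. dd k ^ t)" for k
    have "(\<lambda>k. - ee k) \<longlonglongrightarrow> - 0" using ee0 by (intro tendsto_intros)
    then have me: "(\<lambda>k. - ee k) \<longlonglongrightarrow> 0" by simp
    have limX: "X \<longlonglongrightarrow> (\<Sum>t<L1. wt \<tau> (C1 ! t) (C1 ! ((t + 1) mod L1))) / real L1"
      unfolding X_def by (rule lim_expr[OF dd1 me L1, where s = s1 and a = "\<lambda>t. wt \<tau> (p1 t) (p1 (Suc t))" and b = "\<lambda>t. wt \<tau> (C1 ! t) (C1 ! ((t + 1) mod L1))"])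
    have limY: "Y \<longlonglongrightarrow> (\<Sum>t<L2. ws \<sigma> (C2 ! t) (C2 ! ((t + 1) mod L2))) / real L2"
      unfolding Y_def by (rule lim_expr[OF dd1 ee0 L2, where s = s2 and a = "\<lambda>t. ws \<sigma> (p2 t) (p2 (Suc t))" and b = "\<lambda>t. ws \<sigma> (C2 ! t) (C2 ! ((t + 1) mod L2))"])
    have XY: "\<forall>k\<in>I. X k \<le> Y k"
    proof
      fix k assume k: "k \<in> I"
      note gk = goodD[OF goodI[OF k]]
      let ?H = "snd (snd (F k))"
      have e1: "\<forall>u v. Gt \<tau> u v \<longrightarrow> (wt \<tau> u v + - ee k) + dd k * ?H v \<le> ?H u"
        using gk(5) by (simp only: diff_conv_add_uminus)
      have i1: "X k \<le> (1 - dd k) * ?H (p1 0)"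
        unfolding X_def L1_def
        using disc_ineq[where w = "\<lambda>u v. wt \<tau> u v + - ee k" and h = ?H, OF e1 ddp(1) ddp(2) p1(3) p1(2) c1] .
      have e2: "\<forall>u v. Gs \<sigma> u v \<longrightarrow> (- (ws \<sigma> u v + ee k)) + dd k * (- ?H v) \<le> - ?H u"
        using gk(6) .
      have i2: "(1 - dd k) * (\<Sum>t<s2. dd k ^ t * (- (ws \<sigma> (p2 t) (p2 (Suc t)) + ee k)))
         + dd k ^ s2 * (\<Sum>t<L2. dd k ^ t * (- (ws \<sigma> (C2 ! t) (C2 ! ((t + 1) mod L2)) + ee k))) / (\<Sum>t<L2. dd k ^ t)
         \<le> (1 - dd k) * (- ?H (p2 0))"
        unfolding L2_def
        using disc_ineq[where w = "\<lambda>u v. - (ws \<sigma> u v + ee k)" and h = "\<lambda>u. - ?H u", OF e2 ddp(1) ddp(2) p2(3) p2(2) c2] .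
      have "(1 - dd k) * ?H (p2 0) \<le> Y k"
      proof -
        have "(\<Sum>t<s2. dd k ^ t * (- (ws \<sigma> (p2 t) (p2 (Suc t)) + ee k))) = - (\<Sum>t<s2. dd k ^ t * (ws \<sigma> (p2 t) (p2 (Suc t)) + ee k))"
          by (subst sum_negf[symmetric]) (rule sum.cong, simp_all add: algebra_simps)
        moreover have "(\<Sum>t<L2. dd k ^ t * (- (ws \<sigma> (C2 ! t) (C2 ! ((t + 1) mod L2)) + ee k))) = - (\<Sum>t<L2. dd k ^ t * (ws \<sigma> (C2 ! t) (C2 ! ((t + 1) mod L2)) + ee k))"
          by (subst sum_negf[symmetric]) (rule sum.cong, simp_all add: algebra_simps)
        ultimately show ?thesis using i2 unfolding Y_def by simp
      qed
      then show "X k \<le> Y k" using i1 p1(1) p2(1) by simp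
    qed
    have "infinite I" using infI unfolding I_def .
    from lim_le_inf[OF limX limY this XY]
    show "gcw (wt \<tau>) C1 / length C1 \<le> gcw (ws \<sigma>) C2 / length C2" unfolding L1_def L2_def gcw_def .
  qed
qed

end



lemma wsum_neg: "wsum (\<lambda>u v. - w u v) p n = - wsum w p n"
  unfolding wsum_def by (simp add: sum_negf)

lemma gcw_neg: "gcw (\<lambda>u v. - w u v) C = - gcw w C"
  unfolding gcw_def by (simp add: sum_negf)

definition nodesS :: "nat \<Rightarrow> nat \<Rightarrow> gnode set" where
  "nodesS M N = MinN ` {..<N} \<union> MaxN ` {..<M}"

lemma finite_nodesS: "finite (nodesS M N)" unfolding nodesS_def by simp

lemma gg_inS: "gg_arc M N A B u v \<Longrightarrow> u \<in> nodesS M N \<and> v \<in> nodesS M N"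
  unfolding nodesS_def by (cases u; cases v) auto

definition Wbd :: "nat \<Rightarrow> nat \<Rightarrow> (gnode \<Rightarrow> gnode \<Rightarrow> real) \<Rightarrow> real" where
  "Wbd M N w = (\<Sum>u\<in>nodesS M N. \<Sum>v\<in>nodesS M N. \<bar>w u v\<bar>)"

lemma Wbd_nonneg: "0 \<le> Wbd M N w" unfolding Wbd_def by (intro sum_nonneg) auto

lemma Wbd_ge: "u \<in> nodesS M N \<Longrightarrow> v \<in> nodesS M N \<Longrightarrow> \<bar>w u v\<bar> \<le> Wbd M N w"
proof -
  assume u: "u \<in> nodesS M N" and v: "v \<in> nodesS M N"
  have "\<bar>w u v\<bar> \<le> (\<Sum>v\<in>nodesS M N. \<bar>w u v\<bar>)" using v finite_nodesS by (intro member_le_sum) auto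
  also have "\<dots> \<le> Wbd M N w" unfolding Wbd_def using u finite_nodesS
    by (intro member_le_sum[where f = "\<lambda>u. \<Sum>v\<in>nodesS M N. \<bar>w u v\<bar>"]) (auto intro: sum_nonneg)
  finally show ?thesis .
qed

lemma gcw_le_W:
  assumes "gcyc (gg_arc M N A B) C"
  shows "gcw (gg_weight A B) C \<le> Wbd M N (gg_weight A B) * length C"
proof -
  have "gcw (gg_weight A B) C \<le> (\<Sum>i<length C. Wbd M N (gg_weight A B))"
    unfolding gcw_def
  proof (rule sum_mono)
    fix i assume "i \<in> {..<length C}"
    then have "gg_arc M N A B (C ! i) (C ! ((i + 1) mod length C))" using assms unfolding gcyc_def by auto
    then have "\<bar>gg_weight A B (C ! i) (C ! ((i + 1) mod length C))\<bar> \<le> Wbd M N (gg_weight A B)"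
      using gg_inS Wbd_ge by blast
    then show "gg_weight A B (C ! i) (C ! ((i + 1) mod length C)) \<le> Wbd M N (gg_weight A B)" by linarith
  qed
  then show ?thesis by (simp add: mult.commute)
qed

lemma gcw_ge_W:
  assumes "gcyc (gg_arc M N A B) C"
  shows "- Wbd M N (gg_weight A B) * length C \<le> gcw (gg_weight A B) C"
proof -
  have "(\<Sum>i<length C. - Wbd M N (gg_weight A B)) \<le> gcw (gg_weight A B) C"
    unfolding gcw_def
  proof (rule sum_mono)
    fix i assume "i \<in> {..<length C}"
    then have "gg_arc M N A B (C ! i) (C ! ((i + 1) mod length C))" using assms unfolding gcyc_def by auto
    then have "\<bar>gg_weight A B (C ! i) (C ! ((i + 1) mod length C))\<bar> \<le> Wbd M N (gg_weight A B)"
      using gg_inS Wbd_ge by blast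
    then show "- Wbd M N (gg_weight A B) \<le> gg_weight A B (C ! i) (C ! ((i + 1) mod length C))" by linarith
  qed
  then show ?thesis by (simp add: mult.commute)
qed

lemma finite_cycles: "finite {C. gcyc (gg_arc M N A B) C}"
proof -
  have "{C. gcyc (gg_arc M N A B) C} \<subseteq> {xs. set xs \<subseteq> nodesS M N \<and> length xs \<le> card (nodesS M N)}"
  proof
    fix C assume "C \<in> {C. gcyc (gg_arc M N A B) C}"
    then have c: "gcyc (gg_arc M N A B) C" by simp
    have sub: "set C \<subseteq> nodesS M N"
    proof
      fix x assume "x \<in> set C"
      then obtain i where i: "i < length C" "x = C ! i" by (auto simp: in_set_conv_nth)
      then have "gg_arc M N A B (C ! i) (C ! ((i + 1) mod length C))" using c unfolding gcyc_def by auto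
      then show "x \<in> nodesS M N" using gg_inS i by blast
    qed
    have "length C = card (set C)" using c unfolding gcyc_def by (simp add: distinct_card)
    also have "\<dots> \<le> card (nodesS M N)" using sub finite_nodesS by (rule card_mono[rotated])
    finally show "C \<in> {xs. set xs \<subseteq> nodesS M N \<and> length xs \<le> card (nodesS M N)}" using sub by simp
  qed
  moreover have "finite {xs. set xs \<subseteq> nodesS M N \<and> length xs \<le> card (nodesS M N)}"
    using finite_nodesS by (rule finite_lists_length_le)
  ultimately show ?thesis by (rule finite_subset)
qed

lemma lin_bound_lim:
  fixes x :: "nat \<Rightarrow> real" and a K :: real
  assumes "\<forall>k. a * k - K \<le> x k \<and> x k \<le> a * k + K"
  shows "(\<lambda>k. x k / real k) \<longlonglongrightarrow> a"
proof (rule tendsto_sandwich[where f = "\<lambda>k. a - K / real k" and h = "\<lambda>k. a + K / real k"])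
  show "eventually (\<lambda>k. a - K / real k \<le> x k / real k) sequentially"
    unfolding eventually_sequentially
  proof (intro exI[of _ 1] allI impI)
    fix k :: nat assume "1 \<le> k"
    then have kp: "0 < real k" by simp
    have "a * k - K \<le> x k" using assms by blast
    then have "(a * k - K) / real k \<le> x k / real k" using kp by (intro divide_right_mono) auto
    moreover have "(a * k - K) / real k = a - K / real k" using kp by (simp add: field_simps)
    ultimately show "a - K / real k \<le> x k / real k" by simp
  qed
  show "eventually (\<lambda>k. x k / real k \<le> a + K / real k) sequentially"
    unfolding eventually_sequentially
  proof (intro exI[of _ 1] allI impI)
    fix k :: nat assume "1 \<le> k"
    then have kp: "0 < real k" by simp
    have "x k \<le> a * k + K" using assms by blast
    then have "x k / real k \<le> (a * k + K) / real k" using kp by (intro divide_right_mono) auto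
    moreover have "(a * k + K) / real k = a + K / real k" using kp by (simp add: field_simps)
    ultimately show "x k / real k \<le> a + K / real k" by simp
  qed
  have "(\<lambda>k. K / real k) \<longlonglongrightarrow> 0" by (rule lim_const_over_n)
  then show "(\<lambda>k. a - K / real k) \<longlonglongrightarrow> a" "(\<lambda>k. a + K / real k) \<longlonglongrightarrow> a"
    using tendsto_diff[of "\<lambda>_. a" a sequentially "\<lambda>k. K / real k" 0]
      tendsto_add[of "\<lambda>_. a" a sequentially "\<lambda>k. K / real k" 0] by auto
qed

lemma lim_upper:
  fixes x :: "nat \<Rightarrow> real" and a K :: real
  assumes "(\<lambda>k. x k / real k) \<longlonglongrightarrow> c" "\<forall>k. x k \<le> a * k + K"
  shows "c \<le> a"
proof -
  have "(\<lambda>k. K / real k) \<longlonglongrightarrow> 0" by (rule lim_const_over_n)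
  then have l: "(\<lambda>k. a + K / real k) \<longlonglongrightarrow> a"
    using tendsto_add[of "\<lambda>_. a" a sequentially "\<lambda>k. K / real k" 0] by auto
  have "\<forall>k\<ge>1. x k / real k \<le> a + K / real k"
  proof (intro allI impI)
    fix k :: nat assume "1 \<le> k"
    then have kp: "0 < real k" by simp
    have "x k \<le> a * k + K" using assms by blast
    then have "x k / real k \<le> (a * k + K) / real k" using kp by (intro divide_right_mono) auto
    moreover have "(a * k + K) / real k = a + K / real k" using kp by (simp add: field_simps)
    ultimately show "x k / real k \<le> a + K / real k" by simp
  qed
  then show ?thesis using LIMSEQ_le[OF assms(1) l] by blast
qed

context game begin

abbreviation "it k j \<equiv> (sharp_map M N A B ^^ k) (\<lambda>_. 0) j"

lemma upper_iter:
  fixes c :: real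
  assumes j: "j < N"
    and cyc: "\<forall>C. gcyc (gg_arc M N A B) C \<and> (\<exists>x\<in>set C. (MinN j, x) \<in> (rel (gg_arc M N A B))\<^sup>*)
              \<longrightarrow> gcw (gg_weight A B) C \<le> c * length C"
  shows "\<exists>K. \<forall>k. it k j \<le> c * real (2 * k) + K"
proof -
  let ?S = "nodesS M N"
  let ?W = "Wbd M N (gg_weight A B)"
  have inS: "\<forall>u v. gg_arc M N A B u v \<longrightarrow> u \<in> ?S \<and> v \<in> ?S" using gg_inS by blast
  have Wb: "\<forall>u v. gg_arc M N A B u v \<longrightarrow> \<bar>gg_weight A B u v\<bar> \<le> ?W" using gg_inS Wbd_ge by blast
  have "it k j \<le> c * real (2 * k) + card ?S * (?W + \<bar>c\<bar>)" for k
  proof -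
    obtain p where p: "p 0 = MinN j" "walk (gg_arc M N A B) p (2 * k)" "it k j = wsum (gg_weight A B) p (2 * k)"
      using iter_walk[OF j] by blast
    show ?thesis using walk_bound[OF finite_nodesS inS Wb Wbd_nonneg cyc p(2) p(1)] p(3) by simp
  qed
  then show ?thesis by blast
qed

lemma lower_iter:
  fixes c :: real
  assumes j: "j < N"
    and cyc: "\<forall>C. gcyc (gg_arc M N A B) C \<and> (\<exists>x\<in>set C. (MinN j, x) \<in> (rel (gg_arc M N A B))\<^sup>*)
              \<longrightarrow> c * length C \<le> gcw (gg_weight A B) C"
  shows "\<exists>K. \<forall>k. c * real (2 * k) - K \<le> it k j"
proof -
  let ?S = "nodesS M N"
  let ?w = "\<lambda>u v. - gg_weight A B u v"
  let ?W = "Wbd M N ?w"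
  have inS: "\<forall>u v. gg_arc M N A B u v \<longrightarrow> u \<in> ?S \<and> v \<in> ?S" using gg_inS by blast
  have Wb: "\<forall>u v. gg_arc M N A B u v \<longrightarrow> \<bar>?w u v\<bar> \<le> ?W"
  proof (intro allI impI)
    fix u v assume "gg_arc M N A B u v"
    then have "u \<in> ?S" "v \<in> ?S" using gg_inS by blast+
    then show "\<bar>?w u v\<bar> \<le> ?W" by (rule Wbd_ge)
  qed
  have cyc': "\<forall>C. gcyc (gg_arc M N A B) C \<and> (\<exists>x\<in>set C. (MinN j, x) \<in> (rel (gg_arc M N A B))\<^sup>*)
              \<longrightarrow> gcw ?w C \<le> (- c) * length C"
    using cyc unfolding gcw_neg by auto
  have "c * real (2 * k) - card ?S * (?W + \<bar>- c\<bar>) \<le> it k j" for k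
  proof -
    obtain p where p: "p 0 = MinN j" "walk (gg_arc M N A B) p (2 * k)" "it k j = wsum (gg_weight A B) p (2 * k)"
      using iter_walk[OF j] by blast
    have "wsum ?w p (2 * k) \<le> (- c) * real (2 * k) + card ?S * (?W + \<bar>- c\<bar>)"
      by (rule walk_bound[OF finite_nodesS inS Wb Wbd_nonneg cyc' p(2) p(1)])
    then show ?thesis using p(3) unfolding wsum_neg by simp
  qed
  then show ?thesis by blast
qed

end



context game begin

lemma it_le_tau:
  assumes "min_strategy M N A \<tau>" "j < N"
  shows "it k j \<le> (sharp_map M N (restrict_strat N A \<tau>) B ^^ k) (\<lambda>_. 0) j"
proof -
  interpret gt: game M N "restrict_strat N A \<tau>" B using game_tau[OF assms(1)] .
  show ?thesis
    by (rule iter_compare[OF _ _ assms(2)]) (use sharp_le_tau[OF assms(1)] gt.sharp_mono in blast)+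
qed

lemma it_ge_sigma:
  assumes "max_strategy M N B \<sigma>" "j < N"
  shows "(sharp_map M N A (restrictB \<sigma> B) ^^ k) (\<lambda>_. 0) j \<le> it k j"
  by (rule iter_compare[OF _ _ assms(2)]) (use sharp_ge_sigma[OF assms(1)] sharp_mono in blast)+

theorem conv:
  "\<exists>\<tau>. min_strategy M N A \<tau> \<and> (\<forall>j. \<not> j < N \<longrightarrow> \<tau> j = 0) \<and>
     (\<forall>j<N. \<exists>c. (\<lambda>k. it k j / real k) \<longlonglongrightarrow> c \<and>
        (\<forall>C. gcyc (Gt \<tau>) C \<and> (\<exists>x\<in>set C. (MinN j, x) \<in> (rel (Gt \<tau>))\<^sup>*) \<longrightarrow> gcw (wt \<tau>) C \<le> c / 2 * length C))"
proof -
  obtain \<sigma> \<tau> where ms: "min_strategy M N A \<tau>" and nz: "\<forall>j. \<not> j < N \<longrightarrow> \<tau> j = 0"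
    and xs: "max_strategy M N B \<sigma>"
    and V: "\<forall>j<N. \<forall>C1 C2 x1 x2. gcyc (Gt \<tau>) C1 \<and> x1 \<in> set C1 \<and> (MinN j, x1) \<in> (rel (Gt \<tau>))\<^sup>* \<and>
        gcyc (Gs \<sigma>) C2 \<and> x2 \<in> set C2 \<and> (MinN j, x2) \<in> (rel (Gs \<sigma>))\<^sup>* \<longrightarrow>
        gcw (wt \<tau>) C1 / length C1 \<le> gcw (ws \<sigma>) C2 / length C2"
    using value_strats by blast
  interpret gt: game M N "restrict_strat N A \<tau>" B using game_tau[OF ms] .
  interpret gs: game M N A "restrictB \<sigma> B" using game_sigma[OF xs] .
  show ?thesis
  proof (intro exI[of _ \<tau>] conjI allI impI ms nz)
    fix j assume j: "j < N"
    define S1 where "S1 = (\<lambda>C. gcw (wt \<tau>) C / length C) ` {C. gcyc (Gt \<tau>) C \<and> (\<exists>x\<in>set C. (MinN j, x) \<in> (rel (Gt \<tau>))\<^sup>*)}"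
    define cj where "cj = (if S1 = {} then - Wbd M N (ws \<sigma>) else Sup S1)"
    have bdd: "bdd_above S1"
      unfolding bdd_above_def
    proof (intro exI[of _ "Wbd M N (wt \<tau>)"] ballI)
      fix s assume "s \<in> S1"
      then obtain C where C: "gcyc (Gt \<tau>) C" "s = gcw (wt \<tau>) C / length C" unfolding S1_def by auto
      have "0 < length C" using gcyc_len[OF C(1)] .
      then show "s \<le> Wbd M N (wt \<tau>)" using gcw_le_W[OF C(1)] C(2) by (simp add: divide_le_eq)
    qed
    have up: "\<forall>C. gcyc (Gt \<tau>) C \<and> (\<exists>x\<in>set C. (MinN j, x) \<in> (rel (Gt \<tau>))\<^sup>*) \<longrightarrow> gcw (wt \<tau>) C \<le> cj * length C"
    proof (intro allI impI)
      fix C assume C: "gcyc (Gt \<tau>) C \<and> (\<exists>x\<in>set C. (MinN j, x) \<in> (rel (Gt \<tau>))\<^sup>*)"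
      then have mem: "gcw (wt \<tau>) C / length C \<in> S1" unfolding S1_def by blast
      then have ne: "S1 \<noteq> {}" by blast
      have "gcw (wt \<tau>) C / length C \<le> cj" unfolding cj_def using ne cSup_upper[OF mem bdd] by simp
      moreover have "0 < length C" using C gcyc_len by blast
      ultimately show "gcw (wt \<tau>) C \<le> cj * length C" by (simp add: divide_le_eq)
    qed
    have lo: "\<forall>C. gcyc (Gs \<sigma>) C \<and> (\<exists>x\<in>set C. (MinN j, x) \<in> (rel (Gs \<sigma>))\<^sup>*) \<longrightarrow> cj * length C \<le> gcw (ws \<sigma>) C"
    proof (intro allI impI)
      fix C assume C: "gcyc (Gs \<sigma>) C \<and> (\<exists>x\<in>set C. (MinN j, x) \<in> (rel (Gs \<sigma>))\<^sup>*)"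
      have L: "0 < length C" using C gcyc_len by blast
      have "cj \<le> gcw (ws \<sigma>) C / length C"
      proof (cases "S1 = {}")
        case True
        have "- Wbd M N (ws \<sigma>) * length C \<le> gcw (ws \<sigma>) C" using gcw_ge_W C by blast
        then show ?thesis unfolding cj_def using True L by (simp add: le_divide_eq)
      next
        case False
        have "\<forall>s\<in>S1. s \<le> gcw (ws \<sigma>) C / length C"
        proof
          fix s assume "s \<in> S1"
          then obtain C1 x1 where C1: "gcyc (Gt \<tau>) C1" "x1 \<in> set C1" "(MinN j, x1) \<in> (rel (Gt \<tau>))\<^sup>*"
            "s = gcw (wt \<tau>) C1 / length C1" unfolding S1_def by auto
          obtain x2 where x2: "x2 \<in> set C" "(MinN j, x2) \<in> (rel (Gs \<sigma>))\<^sup>*" using C by blast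
          show "s \<le> gcw (ws \<sigma>) C / length C" using V j C1 C x2 by blast
        qed
        then show ?thesis unfolding cj_def using False by (simp add: cSup_least)
      qed
      then show "cj * length C \<le> gcw (ws \<sigma>) C" using L by (simp add: le_divide_eq)
    qed
    obtain K1 where K1: "\<forall>k. (sharp_map M N (restrict_strat N A \<tau>) B ^^ k) (\<lambda>_. 0) j \<le> cj * real (2 * k) + K1"
      using gt.upper_iter[OF j up] by blast
    obtain K2 where K2: "\<forall>k. cj * real (2 * k) - K2 \<le> (sharp_map M N A (restrictB \<sigma> B) ^^ k) (\<lambda>_. 0) j"
      using gs.lower_iter[OF j lo] by blast
    have "\<forall>k. (2 * cj) * k - max K1 K2 \<le> it k j \<and> it k j \<le> (2 * cj) * k + max K1 K2"
    proof
      fix k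
      have a: "it k j \<le> cj * real (2 * k) + K1" using order_trans[OF it_le_tau[OF ms j, of k] K1[rule_format, of k]] .
      have b: "cj * real (2 * k) - K2 \<le> it k j" using order_trans[OF K2[rule_format, of k] it_ge_sigma[OF xs j, of k]] .
      have e: "cj * real (2 * k) = (2 * cj) * k" by simp
      show "(2 * cj) * k - max K1 K2 \<le> it k j \<and> it k j \<le> (2 * cj) * k + max K1 K2"
        using a b unfolding e by linarith
    qed
    then have "(\<lambda>k. it k j / real k) \<longlonglongrightarrow> 2 * cj" by (rule lin_bound_lim)
    moreover have "\<forall>C. gcyc (Gt \<tau>) C \<and> (\<exists>x\<in>set C. (MinN j, x) \<in> (rel (Gt \<tau>))\<^sup>*) \<longrightarrow> gcw (wt \<tau>) C \<le> (2 * cj) / 2 * length C"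
      using up by simp
    ultimately show "\<exists>c. (\<lambda>k. it k j / real k) \<longlonglongrightarrow> c \<and>
        (\<forall>C. gcyc (Gt \<tau>) C \<and> (\<exists>x\<in>set C. (MinN j, x) \<in> (rel (Gt \<tau>))\<^sup>*) \<longrightarrow> gcw (wt \<tau>) C \<le> c / 2 * length C)"
      by blast
  next
    fix j assume "\<not> j < N" then show "\<tau> j = 0" using nz by simp
  qed
qed

lemma ct_lim: "j < N \<Longrightarrow> (\<lambda>k. it k j / real k) \<longlonglongrightarrow> cycle_time M N A B j"
proof -
  assume j: "j < N"
  obtain c where "(\<lambda>k. it k j / real k) \<longlonglongrightarrow> c" using conv j by blast
  then show ?thesis unfolding cycle_time_def by (simp add: limI)
qed

lemma ct_neg:
  assumes j: "j < N" and neg: "cycle_time M N A B j < 0"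
  shows "\<exists>\<tau>. min_strategy M N A \<tau> \<and> (\<forall>j. \<not> j < N \<longrightarrow> \<tau> j = 0) \<and>
     (\<forall>C. gcyc (Gt \<tau>) C \<and> (\<exists>x\<in>set C. (MinN j, x) \<in> (rel (Gt \<tau>))\<^sup>*) \<longrightarrow> gcw (wt \<tau>) C < 0)"
proof -
  obtain \<tau> c where t: "min_strategy M N A \<tau>" "\<forall>j. \<not> j < N \<longrightarrow> \<tau> j = 0"
    and c: "(\<lambda>k. it k j / real k) \<longlonglongrightarrow> c"
    and cy: "\<forall>C. gcyc (Gt \<tau>) C \<and> (\<exists>x\<in>set C. (MinN j, x) \<in> (rel (Gt \<tau>))\<^sup>*) \<longrightarrow> gcw (wt \<tau>) C \<le> c / 2 * length C"
    using conv j by blast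
  have "c = cycle_time M N A B j" using LIMSEQ_unique[OF c ct_lim[OF j]] .
  then have cn: "c < 0" using neg by simp
  show ?thesis
  proof (intro exI[of _ \<tau>] conjI t allI impI)
    fix C assume C: "gcyc (Gt \<tau>) C \<and> (\<exists>x\<in>set C. (MinN j, x) \<in> (rel (Gt \<tau>))\<^sup>*)"
    have L: "0 < length C" using C gcyc_len by blast
    have "c / 2 * length C < 0" using cn L by (simp add: mult_neg_pos)
    then show "gcw (wt \<tau>) C < 0" using cy C by force
  qed
qed

lemma ct_pos:
  assumes j: "j < N" and ms: "min_strategy M N A \<tau>"
    and neg: "\<forall>C. gcyc (Gt \<tau>) C \<and> (\<exists>x\<in>set C. (MinN j, x) \<in> (rel (Gt \<tau>))\<^sup>*) \<longrightarrow> gcw (wt \<tau>) C < 0"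
  shows "cycle_time M N A B j < 0"
proof -
  interpret gt: game M N "restrict_strat N A \<tau>" B using game_tau[OF ms] .
  define T where "T = {C. gcyc (Gt \<tau>) C \<and> (\<exists>x\<in>set C. (MinN j, x) \<in> (rel (Gt \<tau>))\<^sup>*)}"
  define MS where "MS = (\<lambda>C. gcw (wt \<tau>) C / length C) ` T"
  have "finite T" unfolding T_def by (rule finite_subset[OF _ finite_cycles]) auto
  then have finMS: "finite MS" unfolding MS_def by simp
  define cs where "cs = (if MS = {} then -1 else Max MS)"
  have msneg: "\<forall>s\<in>MS. s < 0"
  proof
    fix s assume "s \<in> MS"
    then obtain C where C: "C \<in> T" "s = gcw (wt \<tau>) C / length C" unfolding MS_def by auto
    have "0 < length C" using C(1) gcyc_len unfolding T_def by blast
    moreover have "gcw (wt \<tau>) C < 0" using neg C(1) unfolding T_def by blast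
    ultimately show "s < 0" using C(2) by (simp add: divide_neg_pos)
  qed
  have csn: "cs < 0"
  proof (cases "MS = {}")
    case True then show ?thesis unfolding cs_def by simp
  next
    case False then show ?thesis unfolding cs_def using msneg Max_in[OF finMS False] by auto
  qed
  have up: "\<forall>C. gcyc (Gt \<tau>) C \<and> (\<exists>x\<in>set C. (MinN j, x) \<in> (rel (Gt \<tau>))\<^sup>*) \<longrightarrow> gcw (wt \<tau>) C \<le> cs * length C"
  proof (intro allI impI)
    fix C assume C: "gcyc (Gt \<tau>) C \<and> (\<exists>x\<in>set C. (MinN j, x) \<in> (rel (Gt \<tau>))\<^sup>*)"
    then have mem: "gcw (wt \<tau>) C / length C \<in> MS" unfolding MS_def T_def by blast
    then have "gcw (wt \<tau>) C / length C \<le> cs" unfolding cs_def using finMS by auto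
    moreover have "0 < length C" using C gcyc_len by blast
    ultimately show "gcw (wt \<tau>) C \<le> cs * length C" by (simp add: divide_le_eq)
  qed
  obtain K where K: "\<forall>k. (sharp_map M N (restrict_strat N A \<tau>) B ^^ k) (\<lambda>_. 0) j \<le> cs * real (2 * k) + K"
    using gt.upper_iter[OF j up] by blast
  have "\<forall>k. it k j \<le> (2 * cs) * k + K"
  proof
    fix k
    have "it k j \<le> cs * real (2 * k) + K" using order_trans[OF it_le_tau[OF ms j, of k] K[rule_format, of k]] .
    then show "it k j \<le> (2 * cs) * k + K" by simp
  qed
  then have "cycle_time M N A B j \<le> 2 * cs" using lim_upper[OF ct_lim[OF j]] by blast
  then show ?thesis using csn by simp
qed

end



lemma arc_eq: "gg_arc M N A' (Bmat m n V d lam) = gg_arc M N A' (Bmat m n V d lam')"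
proof (intro ext)
  fix u v show "gg_arc M N A' (Bmat m n V d lam) u v = gg_arc M N A' (Bmat m n V d lam') u v"
    by (cases u; cases v) (auto simp: Bmat_def)
qed

lemma weight_shift:
  assumes "gg_arc (m + n + 1) (n + 1) A' (Bmat m n V d lam0) u v"
  shows "gg_weight A' (Bmat m n V d lam) u v
    = gg_weight A' (Bmat m n V d lam0) u v - (if (\<exists>i. u = MaxN i \<and> m \<le> i) then lam0 - lam else 0)"
proof (cases u)
  case (MaxN i)
  then obtain l where v: "v = MinN l" using assms by (cases v) auto
  have a: "i < m + n + 1" "l < n + 1" "Bmat m n V d lam0 i l \<noteq> -\<infinity>" using assms MaxN v by auto
  show ?thesis
  proof (cases "i < m")
    case True then show ?thesis using MaxN v by (simp add: Bmat_def)
  next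
    case False
    then show ?thesis using MaxN v a by (auto simp: Bmat_def split: if_splits)
  qed
next
  case (MinN j)
  then obtain i where v: "v = MaxN i" using assms by (cases v) auto
  show ?thesis using MinN v by simp
qed

definition cntm :: "nat \<Rightarrow> gnode list \<Rightarrow> nat" where
  "cntm m C = card {t \<in> {..<length C}. \<exists>i. C ! t = MaxN i \<and> m \<le> i}"

lemma gcw_shift:
  assumes "gcyc (gg_arc (m + n + 1) (n + 1) A' (Bmat m n V d lam0)) C"
  shows "gcw (gg_weight A' (Bmat m n V d lam)) C = gcw (gg_weight A' (Bmat m n V d lam0)) C - (lam0 - lam) * cntm m C"
proof -
  let ?P = "\<lambda>t. \<exists>i. C ! t = MaxN i \<and> m \<le> i"
  have "gcw (gg_weight A' (Bmat m n V d lam)) C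
      = (\<Sum>t<length C. gg_weight A' (Bmat m n V d lam0) (C ! t) (C ! ((t + 1) mod length C)) - (if ?P t then lam0 - lam else 0))"
    unfolding gcw_def
  proof (rule sum.cong)
    fix t assume "t \<in> {..<length C}"
    then have "gg_arc (m + n + 1) (n + 1) A' (Bmat m n V d lam0) (C ! t) (C ! ((t + 1) mod length C))"
      using assms unfolding gcyc_def by auto
    from weight_shift[OF this, of lam]
    show "gg_weight A' (Bmat m n V d lam) (C ! t) (C ! ((t + 1) mod length C))
      = gg_weight A' (Bmat m n V d lam0) (C ! t) (C ! ((t + 1) mod length C)) - (if ?P t then lam0 - lam else 0)" .
  qed simp
  also have "\<dots> = gcw (gg_weight A' (Bmat m n V d lam0)) C - (\<Sum>t<length C. if ?P t then lam0 - lam else 0)"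
    unfolding gcw_def by (simp add: sum_subtractf)
  also have "(\<Sum>t<length C. if ?P t then lam0 - lam else 0) = (\<Sum>t\<in>{t \<in> {..<length C}. ?P t}. lam0 - lam)"
    by (rule sum.inter_filter[symmetric]) simp
  also have "\<dots> = (lam0 - lam) * cntm m C" unfolding cntm_def by simp
  finally show ?thesis .
qed

lemma cntm_pos: "0 < cntm m C \<longleftrightarrow> (\<exists>i. MaxN i \<in> set C \<and> m \<le> i)"
proof
  assume "0 < cntm m C"
  then have "{t \<in> {..<length C}. \<exists>i. C ! t = MaxN i \<and> m \<le> i} \<noteq> {}" unfolding cntm_def card_gt_0_iff by simp
  then obtain t i where t: "t < length C" "C ! t = MaxN i" "m \<le> i" by auto
  then have "MaxN i \<in> set C" using nth_mem[OF t(1)] by simp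
  then show "\<exists>i. MaxN i \<in> set C \<and> m \<le> i" using t(3) by blast
next
  assume "\<exists>i. MaxN i \<in> set C \<and> m \<le> i"
  then obtain i where i: "MaxN i \<in> set C" "m \<le> i" by blast
  then obtain t where t: "t < length C" "C ! t = MaxN i" by (auto simp: in_set_conv_nth)
  then have "t \<in> {t \<in> {..<length C}. \<exists>i. C ! t = MaxN i \<and> m \<le> i}" using i(2) by auto
  then have "{t \<in> {..<length C}. \<exists>i. C ! t = MaxN i \<and> m \<le> i} \<noteq> {}" by blast
  then show "0 < cntm m C" unfolding cntm_def card_gt_0_iff by simp
qed

lemma Phi_img: "Phi m n U b p q V d lam = Min ((\<lambda>i. cycle_time (m + n + 1) (n + 1) (Amat m n U b p q) (Bmat m n V d lam) i) ` {..<n + 1})"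
  unfolding Phi_def by (simp add: setcompr_eq_image lessThan_def)

lemma Phi_le: "j < n + 1 \<Longrightarrow> Phi m n U b p q V d lam \<le> cycle_time (m + n + 1) (n + 1) (Amat m n U b p q) (Bmat m n V d lam) j"
  unfolding Phi_img by (intro Min_le) auto

lemma Phi_lt: "Phi m n U b p q V d lam < 0 \<Longrightarrow> \<exists>j<n + 1. cycle_time (m + n + 1) (n + 1) (Amat m n U b p q) (Bmat m n V d lam) j < 0"
proof -
  assume a: "Phi m n U b p q V d lam < 0"
  have "Phi m n U b p q V d lam \<in> (\<lambda>i. cycle_time (m + n + 1) (n + 1) (Amat m n U b p q) (Bmat m n V d lam) i) ` {..<n + 1}"
    unfolding Phi_img by (intro Min_in) auto
  then show ?thesis using a by auto
qed

theorem proposition7: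
  fixes m n :: nat
    and U V :: "nat \<Rightarrow> nat \<Rightarrow> ereal"
    and b d p q :: "nat \<Rightarrow> ereal"
    and lam0 :: real
  assumes U_fin: "\<forall>i < m. \<forall>j < n. U i j \<noteq> \<infinity>"
    and V_fin: "\<forall>i < m. \<forall>j < n. V i j \<noteq> \<infinity>"
    and b_fin: "\<forall>i < m. b i \<noteq> \<infinity>"
    and d_fin: "\<forall>i < m. d i \<noteq> \<infinity>"
    and p_fin: "\<forall>j < n. p j \<noteq> \<infinity>"
    and q_fin: "\<forall>j < n. q j \<noteq> -\<infinity>"
    and A_cols: "\<forall>j < n + 1. \<exists>i < m + n + 1. Amat m n U b p q i j \<noteq> -\<infinity>"
    and B_rows: "\<forall>lam. \<forall>i < m + n + 1. \<exists>l < n + 1. Bmat m n V d lam i l \<noteq> -\<infinity>"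
  shows "optimal (Phi m n U b p q V d) lam0 \<longleftrightarrow>
    (Phi m n U b p q V d lam0 \<ge> 0 \<and>
     (\<exists>\<tau> j. min_strategy (m + n + 1) (n + 1) (Amat m n U b p q) \<tau> \<and> j < n + 1 \<and>
        (let Atau = restrict_strat (n + 1) (Amat m n U b p q) \<tau>;
             Blam = Bmat m n V d lam0
         in (\<forall>cs. gg_cycle (m + n + 1) (n + 1) Atau Blam cs
                   \<and> cycle_accessible (m + n + 1) (n + 1) Atau Blam (MinN j) cs
                   \<longrightarrow> cycle_weight Atau Blam cs \<le> 0
                       \<and> (cycle_weight Atau Blam cs = 0 \<longrightarrow> (\<exists>i. MaxN i \<in> set cs \<and> m \<le> i))))))"
proof -
  let ?M = "m + n + 1" and ?N = "n + 1" and ?A = "Amat m n U b p q"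
  let ?B = "\<lambda>lam. Bmat m n V d lam"
  have gm: "game ?M ?N ?A (?B lam)" for lam
    unfolding game_def using A_cols B_rows by blast
  show ?thesis
  proof
    assume opt: "optimal (Phi m n U b p q V d) lam0"
    then have P0: "Phi m n U b p q V d lam0 \<ge> 0" and Pl: "\<And>lam. lam < lam0 \<Longrightarrow> Phi m n U b p q V d lam < 0"
      unfolding optimal_def by auto
    define lam where "lam i = lam0 - inverse (real (Suc i))" for i :: nat
    have lam_lt: "lam i < lam0" for i unfolding lam_def by simp
    have ex: "\<exists>j \<tau>. j < ?N \<and> min_strategy ?M ?N ?A \<tau> \<and> (\<forall>j. \<not> j < ?N \<longrightarrow> \<tau> j = 0) \<and>
      (\<forall>C. gcyc (gg_arc ?M ?N (restrict_strat ?N ?A \<tau>) (?B (lam i))) C \<and>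
         (\<exists>x\<in>set C. (MinN j, x) \<in> (rel (gg_arc ?M ?N (restrict_strat ?N ?A \<tau>) (?B (lam i))))\<^sup>*)
         \<longrightarrow> gcw (gg_weight (restrict_strat ?N ?A \<tau>) (?B (lam i))) C < 0)" for i
    proof -
      interpret g: game ?M ?N ?A "?B (lam i)" using gm .
      obtain j where j: "j < ?N" "cycle_time ?M ?N ?A (?B (lam i)) j < 0" using Phi_lt[OF Pl[OF lam_lt]] by blast
      from g.ct_neg[OF j] show ?thesis using j(1) by blast
    qed
    define F where "F i = (SOME x. fst x < ?N \<and> min_strategy ?M ?N ?A (snd x) \<and> (\<forall>j. \<not> j < ?N \<longrightarrow> snd x j = 0) \<and>
      (\<forall>C. gcyc (gg_arc ?M ?N (restrict_strat ?N ?A (snd x)) (?B (lam i))) C \<and>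
         (\<exists>y\<in>set C. (MinN (fst x), y) \<in> (rel (gg_arc ?M ?N (restrict_strat ?N ?A (snd x)) (?B (lam i))))\<^sup>*)
         \<longrightarrow> gcw (gg_weight (restrict_strat ?N ?A (snd x)) (?B (lam i))) C < 0))" for i
    have Fp: "fst (F i) < ?N \<and> min_strategy ?M ?N ?A (snd (F i)) \<and> (\<forall>j. \<not> j < ?N \<longrightarrow> snd (F i) j = 0) \<and>
      (\<forall>C. gcyc (gg_arc ?M ?N (restrict_strat ?N ?A (snd (F i))) (?B (lam i))) C \<and>
         (\<exists>y\<in>set C. (MinN (fst (F i)), y) \<in> (rel (gg_arc ?M ?N (restrict_strat ?N ?A (snd (F i))) (?B (lam i))))\<^sup>*)
         \<longrightarrow> gcw (gg_weight (restrict_strat ?N ?A (snd (F i))) (?B (lam i))) C < 0)" for i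
    proof -
      obtain j \<tau> where "j < ?N \<and> min_strategy ?M ?N ?A \<tau> \<and> (\<forall>j. \<not> j < ?N \<longrightarrow> \<tau> j = 0) \<and>
      (\<forall>C. gcyc (gg_arc ?M ?N (restrict_strat ?N ?A \<tau>) (?B (lam i))) C \<and>
         (\<exists>x\<in>set C. (MinN j, x) \<in> (rel (gg_arc ?M ?N (restrict_strat ?N ?A \<tau>) (?B (lam i))))\<^sup>*)
         \<longrightarrow> gcw (gg_weight (restrict_strat ?N ?A \<tau>) (?B (lam i))) C < 0)" using ex[of i] by blast
      then have "\<exists>x. fst x < ?N \<and> min_strategy ?M ?N ?A (snd x) \<and> (\<forall>j. \<not> j < ?N \<longrightarrow> snd x j = 0) \<and>
      (\<forall>C. gcyc (gg_arc ?M ?N (restrict_strat ?N ?A (snd x)) (?B (lam i))) C \<and>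
         (\<exists>y\<in>set C. (MinN (fst x), y) \<in> (rel (gg_arc ?M ?N (restrict_strat ?N ?A (snd x)) (?B (lam i))))\<^sup>*)
         \<longrightarrow> gcw (gg_weight (restrict_strat ?N ?A (snd x)) (?B (lam i))) C < 0)"
        by (intro exI[of _ "(j, \<tau>)"]) simp
      from someI_ex[OF this] show ?thesis unfolding F_def .
    qed
    define TT where "TT = {f. \<forall>x. (x \<in> {..<?N} \<longrightarrow> f x \<in> {..<?M}) \<and> (x \<notin> {..<?N} \<longrightarrow> f x = (0::nat))}"
    have "finite TT" unfolding TT_def by (intro finite_set_of_finite_funs) auto
    then have finT: "finite ({..<?N} \<times> TT)" by simp
    have "range F \<subseteq> {..<?N} \<times> TT"
    proof
      fix y assume "y \<in> range F"
      then obtain i where i: "y = F i" by auto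
      have "fst (F i) < ?N" "min_strategy ?M ?N ?A (snd (F i))" "\<forall>j. \<not> j < ?N \<longrightarrow> snd (F i) j = 0"
        using Fp[of i] by auto
      then show "y \<in> {..<?N} \<times> TT" unfolding i TT_def min_strategy_def by (cases "F i") auto
    qed
    then have "finite (range F)" using finT finite_subset by blast
    then have "\<exists>y\<in>range F. infinite (F -` {y})" by (intro inf_img_fin_dom) auto
    then obtain y where infI: "infinite (F -` {y})" by blast
    obtain j \<tau> where y: "y = (j, \<tau>)" by (cases y)
    define I where "I = F -` {y}"
    have FI: "F i = (j, \<tau>)" if "i \<in> I" for i using that unfolding I_def y by simp
    obtain i0 where i0: "i0 \<in> I" using infI unfolding I_def by (metis finite.emptyI ex_in_conv)
    have j: "j < ?N" and ms: "min_strategy ?M ?N ?A \<tau>" using Fp[of i0] FI[OF i0] by auto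
    have negI: "\<forall>C. gcyc (gg_arc ?M ?N (restrict_strat ?N ?A \<tau>) (?B lam0)) C \<and>
         (\<exists>y\<in>set C. (MinN j, y) \<in> (rel (gg_arc ?M ?N (restrict_strat ?N ?A \<tau>) (?B lam0)))\<^sup>*)
         \<longrightarrow> gcw (gg_weight (restrict_strat ?N ?A \<tau>) (?B (lam i))) C < 0" if "i \<in> I" for i
      using Fp[of i] FI[OF that] arc_eq[of ?M ?N "restrict_strat ?N ?A \<tau>" m n V d "lam i" lam0] by simp
    show "Phi m n U b p q V d lam0 \<ge> 0 \<and>
     (\<exists>\<tau> j. min_strategy (m + n + 1) (n + 1) (Amat m n U b p q) \<tau> \<and> j < n + 1 \<and>
        (let Atau = restrict_strat (n + 1) (Amat m n U b p q) \<tau>;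
             Blam = Bmat m n V d lam0
         in (\<forall>cs. gg_cycle (m + n + 1) (n + 1) Atau Blam cs
                   \<and> cycle_accessible (m + n + 1) (n + 1) Atau Blam (MinN j) cs
                   \<longrightarrow> cycle_weight Atau Blam cs \<le> 0
                       \<and> (cycle_weight Atau Blam cs = 0 \<longrightarrow> (\<exists>i. MaxN i \<in> set cs \<and> m \<le> i)))))"
    proof (intro conjI P0 exI[of _ \<tau>] exI[of _ j] ms j)
      show "let Atau = restrict_strat (n + 1) (Amat m n U b p q) \<tau>;
             Blam = Bmat m n V d lam0
         in (\<forall>cs. gg_cycle (m + n + 1) (n + 1) Atau Blam cs
                   \<and> cycle_accessible (m + n + 1) (n + 1) Atau Blam (MinN j) cs
                   \<longrightarrow> cycle_weight Atau Blam cs \<le> 0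
                       \<and> (cycle_weight Atau Blam cs = 0 \<longrightarrow> (\<exists>i. MaxN i \<in> set cs \<and> m \<le> i)))"
        unfolding Let_def
      proof (intro allI impI)
        fix cs
        assume H: "gg_cycle ?M ?N (restrict_strat ?N ?A \<tau>) (?B lam0) cs \<and>
          cycle_accessible ?M ?N (restrict_strat ?N ?A \<tau>) (?B lam0) (MinN j) cs"
        have c: "gcyc (gg_arc ?M ?N (restrict_strat ?N ?A \<tau>) (?B lam0)) cs"
          using H unfolding gg_cycle_def gcyc_def by blast
        have acc: "\<exists>y\<in>set cs. (MinN j, y) \<in> (rel (gg_arc ?M ?N (restrict_strat ?N ?A \<tau>) (?B lam0)))\<^sup>*"
          using H unfolding cycle_accessible_def gg_reach_def by blast
        let ?W = "gcw (gg_weight (restrict_strat ?N ?A \<tau>) (?B lam0)) cs"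
        have sh: "gcw (gg_weight (restrict_strat ?N ?A \<tau>) (?B (lam i))) cs = ?W - (lam0 - lam i) * cntm m cs" for i
          by (rule gcw_shift[OF c])
        have neg: "?W - inverse (real (Suc i)) * cntm m cs < 0" if "i \<in> I" for i
        proof -
          have "gcw (gg_weight (restrict_strat ?N ?A \<tau>) (?B (lam i))) cs < 0"
            using negI[OF that, rule_format, OF conjI[OF c acc]] .
          moreover have "lam0 - lam i = inverse (real (Suc i))" unfolding lam_def by simp
          ultimately show ?thesis using sh[of i] by simp
        qed
        have cw: "cycle_weight (restrict_strat ?N ?A \<tau>) (?B lam0) cs = ?W"
          unfolding cycle_weight_def gcw_def ..
        have "(\<lambda>i. inverse (real (Suc i))) \<longlonglongrightarrow> 0" by (rule LIMSEQ_inverse_real_of_nat)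
        then have "(\<lambda>i. ?W - inverse (real (Suc i)) * cntm m cs) \<longlonglongrightarrow> ?W - 0 * real (cntm m cs)"
          by (intro tendsto_intros)
        then have lim: "(\<lambda>i. ?W - inverse (real (Suc i)) * cntm m cs) \<longlonglongrightarrow> ?W" by simp
        have "infinite I" using infI unfolding I_def .
        moreover have "\<forall>i\<in>I. ?W - inverse (real (Suc i)) * cntm m cs \<le> (\<lambda>_. 0) i" using neg by (simp add: less_imp_le)
        ultimately have W0: "?W \<le> 0" by (rule lim_le_inf[OF lim tendsto_const])
        have "?W = 0 \<longrightarrow> (\<exists>i. MaxN i \<in> set cs \<and> m \<le> i)"
        proof
          assume W: "?W = 0"
          show "\<exists>i. MaxN i \<in> set cs \<and> m \<le> i"
          proof (rule ccontr)
            assume "\<not> (\<exists>i. MaxN i \<in> set cs \<and> m \<le> i)"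
            then have "cntm m cs = 0" using cntm_pos by blast
            then show False using neg[OF i0] W by simp
          qed
        qed
        then show "cycle_weight (restrict_strat ?N ?A \<tau>) (?B lam0) cs \<le> 0 \<and>
          (cycle_weight (restrict_strat ?N ?A \<tau>) (?B lam0) cs = 0 \<longrightarrow> (\<exists>i. MaxN i \<in> set cs \<and> m \<le> i))"
          using W0 cw by simp
      qed
    qed
  next
    assume R: "Phi m n U b p q V d lam0 \<ge> 0 \<and>
     (\<exists>\<tau> j. min_strategy (m + n + 1) (n + 1) (Amat m n U b p q) \<tau> \<and> j < n + 1 \<and>
        (let Atau = restrict_strat (n + 1) (Amat m n U b p q) \<tau>;
             Blam = Bmat m n V d lam0
         in (\<forall>cs. gg_cycle (m + n + 1) (n + 1) Atau Blam cs
                   \<and> cycle_accessible (m + n + 1) (n + 1) Atau Blam (MinN j) cs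
                   \<longrightarrow> cycle_weight Atau Blam cs \<le> 0
                       \<and> (cycle_weight Atau Blam cs = 0 \<longrightarrow> (\<exists>i. MaxN i \<in> set cs \<and> m \<le> i)))))"
    then have P0: "Phi m n U b p q V d lam0 \<ge> 0" by blast
    from R obtain \<tau> j where ms: "min_strategy ?M ?N ?A \<tau>" and j: "j < ?N"
      and cert: "\<forall>cs. gg_cycle ?M ?N (restrict_strat ?N ?A \<tau>) (?B lam0) cs
                   \<and> cycle_accessible ?M ?N (restrict_strat ?N ?A \<tau>) (?B lam0) (MinN j) cs
                   \<longrightarrow> cycle_weight (restrict_strat ?N ?A \<tau>) (?B lam0) cs \<le> 0
                       \<and> (cycle_weight (restrict_strat ?N ?A \<tau>) (?B lam0) cs = 0 \<longrightarrow> (\<exists>i. MaxN i \<in> set cs \<and> m \<le> i))"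
      unfolding Let_def by blast
    have "Phi m n U b p q V d lam < 0" if lam: "lam < lam0" for lam
    proof -
      interpret g: game ?M ?N ?A "?B lam" using gm .
      have "\<forall>C. gcyc (gg_arc ?M ?N (restrict_strat ?N ?A \<tau>) (?B lam)) C \<and>
         (\<exists>x\<in>set C. (MinN j, x) \<in> (rel (gg_arc ?M ?N (restrict_strat ?N ?A \<tau>) (?B lam)))\<^sup>*)
         \<longrightarrow> gcw (gg_weight (restrict_strat ?N ?A \<tau>) (?B lam)) C < 0"
      proof (intro allI impI)
        fix C assume H: "gcyc (gg_arc ?M ?N (restrict_strat ?N ?A \<tau>) (?B lam)) C \<and>
         (\<exists>x\<in>set C. (MinN j, x) \<in> (rel (gg_arc ?M ?N (restrict_strat ?N ?A \<tau>) (?B lam)))\<^sup>*)"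
        have c: "gcyc (gg_arc ?M ?N (restrict_strat ?N ?A \<tau>) (?B lam0)) C"
          using H arc_eq[of ?M ?N "restrict_strat ?N ?A \<tau>" m n V d lam lam0] by simp
        have acc: "\<exists>x\<in>set C. (MinN j, x) \<in> (rel (gg_arc ?M ?N (restrict_strat ?N ?A \<tau>) (?B lam0)))\<^sup>*"
          using H arc_eq[of ?M ?N "restrict_strat ?N ?A \<tau>" m n V d lam lam0] by simp
        have "gg_cycle ?M ?N (restrict_strat ?N ?A \<tau>) (?B lam0) C
              \<and> cycle_accessible ?M ?N (restrict_strat ?N ?A \<tau>) (?B lam0) (MinN j) C"
          using c acc unfolding gg_cycle_def gcyc_def cycle_accessible_def gg_reach_def by blast
        then have cc: "cycle_weight (restrict_strat ?N ?A \<tau>) (?B lam0) C \<le> 0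
                       \<and> (cycle_weight (restrict_strat ?N ?A \<tau>) (?B lam0) C = 0 \<longrightarrow> (\<exists>i. MaxN i \<in> set C \<and> m \<le> i))"
          using cert by blast
        let ?W = "gcw (gg_weight (restrict_strat ?N ?A \<tau>) (?B lam0)) C"
        have cw: "cycle_weight (restrict_strat ?N ?A \<tau>) (?B lam0) C = ?W"
          unfolding cycle_weight_def gcw_def ..
        have sh: "gcw (gg_weight (restrict_strat ?N ?A \<tau>) (?B lam)) C = ?W - (lam0 - lam) * cntm m C"
          by (rule gcw_shift[OF c])
        have dpos: "0 < lam0 - lam" using lam by simp
        show "gcw (gg_weight (restrict_strat ?N ?A \<tau>) (?B lam)) C < 0"
        proof (cases "?W = 0")
          case True
          then have "0 < cntm m C" using cc cw cntm_pos by simp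
          then have "0 < (lam0 - lam) * cntm m C" using dpos by simp
          then show ?thesis using sh True by simp
        next
          case False
          then have "?W < 0" using cc cw by simp
          moreover have "0 \<le> (lam0 - lam) * cntm m C" using dpos by simp
          ultimately show ?thesis using sh by simp
        qed
      qed
      then have "cycle_time ?M ?N ?A (?B lam) j < 0" by (rule g.ct_pos[OF j ms])
      then show ?thesis using Phi_le[OF j, of m U b p q V d lam] by simp
    qed
    then show "optimal (Phi m n U b p q V d) lam0" unfolding optimal_def using P0 by blast
  qed
qed

end
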